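(* Let $A$ be a positively graded commutative coherent ring, let $E$ be an indecomposable injective graded $A$-module, and let $P(E)$ be the sum of annihilator ideals of non-zero homogeneous elements of $E$. Then $E$ and $E_{P(E)}$ are topologically indistinguishable in $\operatorname{inj}_{\mathrm{zg}}A$ and in $\operatorname{inj}_{\mathrm{zar}}A$; that is, for every $M\in\operatorname{gr}A$, $\mathcal Hom_A(M,E)\ne0$ if and only if $\mathcal Hom_A(M,E_{P(E)})\ne0$.
   Context: All rings are commutative with unit; $A=\bigoplus_{j\ge0}A_j$. $\operatorname{Gr}A$: graded $A$-modules, shifts $M(n)_j=M_{n+j}$; $\operatorname{gr}A$: finitely presented graded modules; $A$ coherent means every finitely generated graded ideal is finitely presented. $\mathcal Hom_A(M,N)=\bigoplus_{n\in\mathbb Z}\operatorname{Gr}A(M,N(n))$. $\operatorname{inj}A$: isomorphism classes of indecomposable injective objects of $\operatorname{Gr}A$. For a homogeneous prime $P$, $E_P$ is the injective hull of $A/P$ in $\operatorname{Gr}A$. $\operatorname{inj}_{\mathrm{zar}}A$: $\operatorname{inj}A$ with basis of opens $[M]=\{E\mid\mathcal Hom_A(M,E)=0\}$, $M\in\operatorname{gr}A$; $\operatorname{inj}_{\mathrm{zg}}A$: $\operatorname{inj}A$ with basis of opens $(M)=\{E\mid\mathcal Hom_A(M,E)\ne0\}$, $M\in\operatorname{gr}A$. *)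

theory Defs
  imports Main
begin

(* Ring A: the whole type 'a (comm_ring_1), grading Ag :: nat => 'a set.
   Graded A-modules: a type 'm :: ab_group_add (carrier = UNIV), scalar action sm,
   grading Mg :: int => 'm set. *)

definition add_subgroup :: "'m::ab_group_add set \<Rightarrow> bool" where
  "add_subgroup S \<longleftrightarrow> 0 \<in> S \<and> (\<forall>x\<in>S. \<forall>y\<in>S. x + y \<in> S) \<and> (\<forall>x\<in>S. - x \<in> S)"

definition dsum_decomp :: "('i \<Rightarrow> 'm::ab_group_add set) \<Rightarrow> bool" where
  "dsum_decomp G \<longleftrightarrow>
     (\<forall>x. \<exists>!c. (\<forall>i. c i \<in> G i) \<and> finite {i. c i \<noteq> 0} \<and> x = (\<Sum>i\<in>{i. c i \<noteq> 0}. c i))"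

definition graded_ring :: "(nat \<Rightarrow> 'a::comm_ring_1 set) \<Rightarrow> bool" where
  "graded_ring Ag \<longleftrightarrow> (\<forall>j. add_subgroup (Ag j)) \<and> 1 \<in> Ag 0 \<and>
     (\<forall>i j. \<forall>x\<in>Ag i. \<forall>y\<in>Ag j. x * y \<in> Ag (i + j)) \<and> dsum_decomp Ag"

text \<open>A regarded as a Z-graded module over itself\<close>
definition Agz :: "(nat \<Rightarrow> 'a::comm_ring_1 set) \<Rightarrow> int \<Rightarrow> 'a set" where
  "Agz Ag n = (if 0 \<le> n then Ag (nat n) else {0})"

definition graded_module :: "(nat \<Rightarrow> 'a::comm_ring_1 set) \<Rightarrow> ('a \<Rightarrow> 'm::ab_group_add \<Rightarrow> 'm)
    \<Rightarrow> (int \<Rightarrow> 'm set) \<Rightarrow> bool" where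
  "graded_module Ag sm Mg \<longleftrightarrow>
     (\<forall>a b x. sm (a + b) x = sm a x + sm b x) \<and> (\<forall>a x y. sm a (x + y) = sm a x + sm a y) \<and>
     (\<forall>a b x. sm (a * b) x = sm a (sm b x)) \<and> (\<forall>x. sm 1 x = x) \<and>
     (\<forall>n. add_subgroup (Mg n)) \<and>
     (\<forall>i n. \<forall>a\<in>Ag i. \<forall>x\<in>Mg n. sm a x \<in> Mg (int i + n)) \<and> dsum_decomp Mg"

definition homogeneous :: "('i \<Rightarrow> 'm set) \<Rightarrow> 'm \<Rightarrow> bool" where
  "homogeneous G x \<longleftrightarrow> (\<exists>n. x \<in> G n)"

definition graded_submodule :: "('a \<Rightarrow> 'm::ab_group_add \<Rightarrow> 'm) \<Rightarrow> (int \<Rightarrow> 'm set) \<Rightarrow> 'm set \<Rightarrow> bool" where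
  "graded_submodule sm Mg S \<longleftrightarrow> add_subgroup S \<and> (\<forall>a. \<forall>x\<in>S. sm a x \<in> S) \<and>
     (\<forall>x\<in>S. \<exists>c. (\<forall>n. c n \<in> S \<inter> Mg n) \<and> finite {n. c n \<noteq> 0} \<and> x = (\<Sum>n\<in>{n. c n \<noteq> 0}. c n))"

text \<open>f : M -> N(d) in Gr A, i.e. a graded A-linear map of degree d\<close>
definition gr_hom :: "('a \<Rightarrow> 'm::ab_group_add \<Rightarrow> 'm) \<Rightarrow> (int \<Rightarrow> 'm set) \<Rightarrow>
    ('a \<Rightarrow> 'n::ab_group_add \<Rightarrow> 'n) \<Rightarrow> (int \<Rightarrow> 'n set) \<Rightarrow> int \<Rightarrow> ('m \<Rightarrow> 'n) \<Rightarrow> bool" where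
  "gr_hom sm Mg sn Ng d f \<longleftrightarrow> (\<forall>x y. f (x + y) = f x + f y) \<and> (\<forall>a x. f (sm a x) = sn a (f x)) \<and>
     (\<forall>n. f ` Mg n \<subseteq> Ng (n + d))"

definition Hom_nonzero :: "('a \<Rightarrow> 'm::ab_group_add \<Rightarrow> 'm) \<Rightarrow> (int \<Rightarrow> 'm set) \<Rightarrow>
    ('a \<Rightarrow> 'n::ab_group_add \<Rightarrow> 'n) \<Rightarrow> (int \<Rightarrow> 'n set) \<Rightarrow> bool" where
  "Hom_nonzero sm Mg sn Ng \<longleftrightarrow> (\<exists>d f. gr_hom sm Mg sn Ng d f \<and> (\<exists>x. f x \<noteq> 0))"

definition hom_on :: "'u set \<Rightarrow> ('a \<Rightarrow> 'u::ab_group_add \<Rightarrow> 'u) \<Rightarrow> (int \<Rightarrow> 'u set) \<Rightarrow>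
    ('a \<Rightarrow> 'e::ab_group_add \<Rightarrow> 'e) \<Rightarrow> (int \<Rightarrow> 'e set) \<Rightarrow> ('u \<Rightarrow> 'e) \<Rightarrow> bool" where
  "hom_on S sn Ng se Eg f \<longleftrightarrow> (\<forall>x\<in>S. \<forall>y\<in>S. f (x + y) = f x + f y) \<and>
     (\<forall>a. \<forall>x\<in>S. f (sn a x) = se a (f x)) \<and> (\<forall>n. f ` (S \<inter> Ng n) \<subseteq> Eg n)"

text \<open>Injectivity in Gr A, tested against graded modules carried by the type 'u
  (every morphism from a graded submodule extends).\<close>
definition gr_injective :: "'u::ab_group_add itself \<Rightarrow> (nat \<Rightarrow> 'a::comm_ring_1 set) \<Rightarrow>
    ('a \<Rightarrow> 'e::ab_group_add \<Rightarrow> 'e) \<Rightarrow> (int \<Rightarrow> 'e set) \<Rightarrow> bool" where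
  "gr_injective T Ag se Eg \<longleftrightarrow>
     (\<forall>(sn::'a \<Rightarrow> 'u \<Rightarrow> 'u) Ng S f. graded_module Ag sn Ng \<and> graded_submodule sn Ng S \<and>
        hom_on S sn Ng se Eg f \<longrightarrow> (\<exists>g. gr_hom sn Ng se Eg 0 g \<and> (\<forall>x\<in>S. g x = f x)))"

definition indecomposable :: "('a \<Rightarrow> 'e::ab_group_add \<Rightarrow> 'e) \<Rightarrow> (int \<Rightarrow> 'e set) \<Rightarrow> bool" where
  "indecomposable se Eg \<longleftrightarrow> (\<exists>x::'e. x \<noteq> 0) \<and>
     (\<forall>S T. graded_submodule se Eg S \<and> graded_submodule se Eg T \<and> S \<inter> T = {0} \<and>
        (\<forall>x. \<exists>s\<in>S. \<exists>t\<in>T. x = s + t) \<longrightarrow> S = {0} \<or> T = {0})"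

definition PE :: "('a::comm_ring_1 \<Rightarrow> 'e::ab_group_add \<Rightarrow> 'e) \<Rightarrow> (int \<Rightarrow> 'e set) \<Rightarrow> 'a set" where
  "PE se Eg = {a. \<exists>F c. finite F \<and> (\<forall>x\<in>F. x \<noteq> 0 \<and> homogeneous Eg x \<and> se (c x) x = 0) \<and>
                         a = (\<Sum>x\<in>F. c x)}"

text \<open>(sf, Fg) is an injective hull of A/P in Gr A: injective, with a degree-0 map
  A -> F whose kernel is P (i.e. an embedding A/P -> F) and whose image is essential.\<close>
definition inj_hull_quot :: "'u::ab_group_add itself \<Rightarrow> (nat \<Rightarrow> 'a::comm_ring_1 set) \<Rightarrow> 'a set \<Rightarrow>
    ('a \<Rightarrow> 'f::ab_group_add \<Rightarrow> 'f) \<Rightarrow> (int \<Rightarrow> 'f set) \<Rightarrow> bool" where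
  "inj_hull_quot T Ag P sf Fg \<longleftrightarrow> graded_module Ag sf Fg \<and> gr_injective T Ag sf Fg \<and>
     (\<exists>\<phi>. gr_hom (*) (Agz Ag) sf Fg 0 \<phi> \<and> {a. \<phi> a = 0} = P \<and>
        (\<forall>S. graded_submodule sf Fg S \<and> S \<noteq> {0} \<longrightarrow> (\<exists>y\<in>S. y \<noteq> 0 \<and> y \<in> range \<phi>)))"

text \<open>A graded submodule S of M is finitely presented: finitely many homogeneous generators
  g_i (of degree d i) and the graded syzygy module is generated by finitely many homogeneous
  relations (r j of degree e j in the graded free module sum_i A(-d i)).\<close>
definition fin_pres :: "(nat \<Rightarrow> 'a::comm_ring_1 set) \<Rightarrow> ('a \<Rightarrow> 'm::ab_group_add \<Rightarrow> 'm) \<Rightarrow>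
    (int \<Rightarrow> 'm set) \<Rightarrow> 'm set \<Rightarrow> bool" where
  "fin_pres Ag sm Mg S \<longleftrightarrow>
     (\<exists>(k::nat) (g::nat \<Rightarrow> 'm) (d::nat \<Rightarrow> int).
        (\<forall>i<k. g i \<in> S \<inter> Mg (d i)) \<and> S = {\<Sum>i<k. sm (a i) (g i) | a. True} \<and>
        (\<exists>(l::nat) (r::nat \<Rightarrow> nat \<Rightarrow> 'a) (e::nat \<Rightarrow> int).
           (\<forall>j<l. (\<forall>i<k. r j i \<in> Agz Ag (e j - d i)) \<and> (\<Sum>i<k. sm (r j i) (g i)) = 0) \<and>
           (\<forall>a. (\<Sum>i<k. sm (a i) (g i)) = 0 \<longrightarrow> (\<exists>b. \<forall>i<k. a i = (\<Sum>j<l. b j * r j i)))))"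

definition in_grA :: "(nat \<Rightarrow> 'a::comm_ring_1 set) \<Rightarrow> ('a \<Rightarrow> 'm::ab_group_add \<Rightarrow> 'm) \<Rightarrow>
    (int \<Rightarrow> 'm set) \<Rightarrow> bool" where
  "in_grA Ag sm Mg \<longleftrightarrow> graded_module Ag sm Mg \<and> fin_pres Ag sm Mg UNIV"

definition fg_graded_ideal :: "(nat \<Rightarrow> 'a::comm_ring_1 set) \<Rightarrow> 'a set \<Rightarrow> bool" where
  "fg_graded_ideal Ag I \<longleftrightarrow>
     (\<exists>(k::nat) h. (\<forall>i<k. homogeneous Ag (h i)) \<and> I = {\<Sum>i<k. a i * h i | a. True})"

definition coherent :: "(nat \<Rightarrow> 'a::comm_ring_1 set) \<Rightarrow> bool" where
  "coherent Ag \<longleftrightarrow> (\<forall>I. fg_graded_ideal Ag I \<longrightarrow> fin_pres Ag (*) (Agz Ag) I)"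

end

theory Submission
  imports Defs
begin

lemma add_subgroup_0: "add_subgroup S \<Longrightarrow> 0 \<in> S"
  by (simp add: add_subgroup_def)
lemma add_subgroup_add: "add_subgroup S \<Longrightarrow> x \<in> S \<Longrightarrow> y \<in> S \<Longrightarrow> x + y \<in> S"
  by (simp add: add_subgroup_def)
lemma add_subgroup_uminus: "add_subgroup S \<Longrightarrow> x \<in> S \<Longrightarrow> - x \<in> S"
  by (simp add: add_subgroup_def)
lemma add_subgroup_diff: "add_subgroup S \<Longrightarrow> x \<in> S \<Longrightarrow> y \<in> S \<Longrightarrow> x - y \<in> S"
  using add_subgroup_add[of S x "-y"] add_subgroup_uminus[of S y] by simp
lemma add_subgroup_sum: "add_subgroup S \<Longrightarrow> (\<And>i. i \<in> D \<Longrightarrow> f i \<in> S) \<Longrightarrow> sum f D \<in> S"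
proof (induction D rule: infinite_finite_induct)
  case (infinite A) then show ?case by (simp add: add_subgroup_0)
next
  case empty then show ?case by (simp add: add_subgroup_0)
next
  case (insert x F) then show ?case by (simp add: add_subgroup_add)
qed

definition comp :: "('i \<Rightarrow> 'm::ab_group_add set) \<Rightarrow> 'm \<Rightarrow> 'i \<Rightarrow> 'm" where
  "comp G x = (THE c. (\<forall>i. c i \<in> G i) \<and> finite {i. c i \<noteq> 0} \<and> x = (\<Sum>i\<in>{i. c i \<noteq> 0}. c i))"

locale gdec =
  fixes G :: "'i \<Rightarrow> 'm::ab_group_add set"
  assumes dec: "dsum_decomp G" and sub: "\<And>i. add_subgroup (G i)"
begin

lemma G0[simp]: "0 \<in> G i" using sub add_subgroup_0 by blast

lemma comp_props: "(\<forall>i. comp G x i \<in> G i) \<and> finite {i. comp G x i \<noteq> 0} \<and> x = (\<Sum>i\<in>{i. comp G x i \<noteq> 0}. comp G x i)"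
  unfolding comp_def using dec[unfolded dsum_decomp_def, rule_format, of x] by (rule theI')

lemma comp_in[simp]: "comp G x i \<in> G i" using comp_props by blast
lemma comp_fin[simp]: "finite {i. comp G x i \<noteq> 0}" using comp_props by blast
lemma comp_sum_supp: "x = (\<Sum>i\<in>{i. comp G x i \<noteq> 0}. comp G x i)" using comp_props by blast

lemma comp_eq: assumes "\<And>i. c i \<in> G i" "finite {i. c i \<noteq> 0}" "x = (\<Sum>i\<in>{i. c i \<noteq> 0}. c i)"
  shows "comp G x = c"
proof -
  have "\<exists>!c. (\<forall>i. c i \<in> G i) \<and> finite {i. c i \<noteq> 0} \<and> x = (\<Sum>i\<in>{i. c i \<noteq> 0}. c i)"
    using dec unfolding dsum_decomp_def by blast
  then show ?thesis using comp_props[of x] assms by blast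
qed

lemma comp_sum_over: assumes "finite D" "{i. comp G x i \<noteq> 0} \<subseteq> D"
  shows "x = (\<Sum>i\<in>D. comp G x i)"
proof -
  have "(\<Sum>i\<in>D. comp G x i) = (\<Sum>i\<in>{i. comp G x i \<noteq> 0}. comp G x i)"
    by (rule sum.mono_neutral_right) (use assms in auto)
  then show ?thesis using comp_sum_supp by simp
qed

lemma comp_sumD: assumes "finite D" "\<And>i. i \<in> D \<Longrightarrow> c i \<in> G i" "x = (\<Sum>i\<in>D. c i)"
  shows "comp G x i = (if i \<in> D then c i else 0)"
proof -
  define c' where "c' i = (if i \<in> D then c i else 0)" for i
  have "(\<Sum>i\<in>{i. c' i \<noteq> 0}. c' i) = (\<Sum>i\<in>D. c' i)"
    by (rule sum.mono_neutral_left) (use assms in \<open>auto simp: c'_def\<close>)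
  also have "\<dots> = x" using assms(3) by (simp add: c'_def)
  finally have "comp G x = c'"
    by (intro comp_eq) (use assms in \<open>auto simp: c'_def intro: finite_subset[of _ D]\<close>)
  then show ?thesis by (simp add: c'_def)
qed

lemma comp_hom: "x \<in> G n \<Longrightarrow> comp G x i = (if i = n then x else 0)"
  using comp_sumD[of "{n}" "\<lambda>_. x" x] by auto

lemma comp_0[simp]: "comp G 0 i = 0"
  using comp_hom[OF G0] by simp

lemma comp_add: "comp G (x + y) i = comp G x i + comp G y i"
proof -
  let ?D = "{i. comp G x i \<noteq> 0} \<union> {i. comp G y i \<noteq> 0}"
  have "x + y = (\<Sum>i\<in>?D. comp G x i + comp G y i)"
    using comp_sum_over[of ?D x] comp_sum_over[of ?D y] by (simp add: sum.distrib)
  have "comp G (x + y) i = (if i \<in> ?D then comp G x i + comp G y i else 0)"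
    by (rule comp_sumD[OF _ _ \<open>x + y = _\<close>]) (auto intro: add_subgroup_add[OF sub])
  then show ?thesis by (cases "i \<in> ?D") auto
qed

lemma comp_uminus: "comp G (- x) i = - comp G x i"
  using comp_add[of x "-x" i] by (simp add: eq_neg_iff_add_eq_0 add.commute)

lemma comp_diff: "comp G (x - y) i = comp G x i - comp G y i"
  using comp_add[of x "-y"] comp_uminus[of y] by simp

lemma comp_sum: "comp G (\<Sum>j\<in>J. f j) i = (\<Sum>j\<in>J. comp G (f j) i)"
  by (induction J rule: infinite_finite_induct) (auto simp: comp_add)

lemma comp_zero_iff: "x = 0 \<longleftrightarrow> (\<forall>i. comp G x i = 0)"
  using comp_sum_supp[of x] by auto

lemma ex_comp_nonzero: "x \<noteq> 0 \<Longrightarrow> \<exists>i. comp G x i \<noteq> 0"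
  using comp_zero_iff by blast

lemma in_G_iff: "x \<in> G n \<longleftrightarrow> (\<forall>i. i \<noteq> n \<longrightarrow> comp G x i = 0)"
proof
  assume "x \<in> G n" then show "\<forall>i. i \<noteq> n \<longrightarrow> comp G x i = 0" by (simp add: comp_hom)
next
  assume "\<forall>i. i \<noteq> n \<longrightarrow> comp G x i = 0"
  then have "x = (\<Sum>i\<in>{n}. comp G x i)" by (intro comp_sum_over) auto
  then show "x \<in> G n" using comp_in[of x n] by simp
qed

lemma comp_comp: "comp G (comp G x n) i = (if i = n then comp G x n else 0)"
  by (simp add: comp_hom)

lemma comp_reindex: assumes "finite D" "inj_on h D" "\<And>j. j \<in> D \<Longrightarrow> c j \<in> G (h j)"
  "x = (\<Sum>j\<in>D. c j)"
  shows "comp G x i = (if i \<in> h ` D then c (the_inv_into D h i) else 0)"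
proof -
  have "x = (\<Sum>i\<in>h ` D. c (the_inv_into D h i))"
    using assms(4) sum.reindex[OF assms(2), of "\<lambda>i. c (the_inv_into D h i)"]
    by (simp add: the_inv_into_f_f[OF assms(2)])
  moreover have "\<And>i. i \<in> h ` D \<Longrightarrow> c (the_inv_into D h i) \<in> G i"
    using assms(2,3) by (auto simp: the_inv_into_f_f)
  ultimately show ?thesis by (intro comp_sumD) (use assms in auto)
qed

lemma comp_reindex': assumes "finite D" "inj h" "\<And>j. j \<in> D \<Longrightarrow> c j \<in> G (h j)"
  "x = (\<Sum>j\<in>D. c j)" "\<And>j. j \<notin> D \<Longrightarrow> c j = 0"
  shows "comp G x (h j) = c j"
proof -
  have "comp G x (h j) = (if h j \<in> h ` D then c (the_inv_into D h (h j)) else 0)"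
    by (rule comp_reindex) (use assms inj_on_subset[of h UNIV D] in auto)
  then show ?thesis using assms(2,5) by (auto simp: the_inv_into_f_f inj_on_subset inj_image_mem_iff)
qed

end

lemma dsum_reindex:
  fixes G :: "'i \<Rightarrow> 'm::ab_group_add set" and h :: "'i \<Rightarrow> 'j"
  assumes "gdec G" "inj h"
  shows "dsum_decomp (\<lambda>j. if j \<in> range h then G (inv h j) else {0})"
  unfolding dsum_decomp_def
proof
  fix x
  interpret gdec G by fact
  let ?G' = "\<lambda>j. if j \<in> range h then G (inv h j) else {0}"
  define c' where "c' j = (if j \<in> range h then comp G x (inv h j) else 0)" for j
  have supp: "{j. c' j \<noteq> 0} = h ` {i. comp G x i \<noteq> 0}"
    using assms(2) by (auto simp: c'_def inj_eq)
  have ex: "(\<forall>j. c' j \<in> ?G' j) \<and> finite {j. c' j \<noteq> 0} \<and> x = (\<Sum>j\<in>{j. c' j \<noteq> 0}. c' j)"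
  proof (intro conjI)
    show "\<forall>j. c' j \<in> ?G' j" by (auto simp: c'_def)
    show "finite {j. c' j \<noteq> 0}" by (simp add: supp)
    have "(\<Sum>j\<in>{j. c' j \<noteq> 0}. c' j) = (\<Sum>i\<in>{i. comp G x i \<noteq> 0}. c' (h i))"
      unfolding supp using sum.reindex[OF inj_on_subset[OF assms(2) subset_UNIV], of c'] by (simp add: o_def)
    also have "\<dots> = x" using comp_sum_supp[of x] assms(2) by (simp add: c'_def)
    finally show "x = (\<Sum>j\<in>{j. c' j \<noteq> 0}. c' j)" by simp
  qed
  show "\<exists>!c. (\<forall>j. c j \<in> ?G' j) \<and> finite {j. c j \<noteq> 0} \<and> x = (\<Sum>j\<in>{j. c j \<noteq> 0}. c j)"
  proof (rule ex1I[of _ c'])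
    show "(\<forall>j. c' j \<in> ?G' j) \<and> finite {j. c' j \<noteq> 0} \<and> x = (\<Sum>j\<in>{j. c' j \<noteq> 0}. c' j)" by (rule ex)
  next
    fix c assume c: "(\<forall>j. c j \<in> ?G' j) \<and> finite {j. c j \<noteq> 0} \<and> x = (\<Sum>j\<in>{j. c j \<noteq> 0}. c j)"
    define d where "d i = c (h i)" for i
    have out: "c j = 0" if "j \<notin> range h" for j using c that by (metis singletonD)
    have dG: "d i \<in> G i" for i using c assms(2) unfolding d_def by (metis inv_f_f rangeI)
    have supp2: "{j. c j \<noteq> 0} = h ` {i. d i \<noteq> 0}" using out unfolding d_def by (auto simp: image_iff) (metis rangeE)
    have fin: "finite {i. d i \<noteq> 0}"
    proof -
      have "finite (h -` {j. c j \<noteq> 0})" using c assms(2) by (intro finite_vimageI) auto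
      then show ?thesis by (simp add: d_def vimage_def)
    qed
    have "x = (\<Sum>i\<in>{i. d i \<noteq> 0}. c (h i))"
      using c unfolding supp2 by (simp add: sum.reindex[OF inj_on_subset[OF assms(2)]])
    then have "comp G x = d" by (intro comp_eq dG fin) (simp add: d_def)
    then show "c = c'" using out assms(2) by (auto simp: c'_def d_def fun_eq_iff)
  qed
qed

lemma gdec_reindex:
  fixes G :: "'i \<Rightarrow> 'm::ab_group_add set" and h :: "'i \<Rightarrow> 'j"
  assumes "gdec G" "inj h"
  shows "gdec (\<lambda>j. if j \<in> range h then G (inv h j) else {0})"
  using dsum_reindex[OF assms] gdec.sub[OF assms(1)]
  by unfold_locales (auto simp: add_subgroup_def)

lemma gdec_shift:
  fixes G :: "int \<Rightarrow> 'm::ab_group_add set"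
  assumes "gdec G" shows "gdec (\<lambda>n. G (n - d))"
proof -
  have inj: "inj (\<lambda>n::int. n + d)" by (auto simp: inj_def)
  have "(\<lambda>j. if j \<in> range (\<lambda>n::int. n + d) then G (inv (\<lambda>n. n + d) j) else {0}) = (\<lambda>n. G (n - d))"
  proof
    fix j :: int
    have "j \<in> range (\<lambda>n::int. n + d)" by (rule range_eqI[of _ _ "j - d"]) simp
    moreover have "inv (\<lambda>n::int. n + d) j = j - d"
      by (rule inv_f_eq[OF inj]) simp
    ultimately show "(if j \<in> range (\<lambda>n::int. n + d) then G (inv (\<lambda>n. n + d) j) else {0}) = G (j - d)" by simp
  qed
  then show ?thesis using gdec_reindex[OF assms inj] by simp
qed

lemma gdec_Agz:
  fixes Ag :: "nat \<Rightarrow> 'a::comm_ring_1 set"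
  assumes "graded_ring Ag" shows "gdec (Agz Ag)"
proof -
  have g: "gdec Ag" using assms by unfold_locales (auto simp: graded_ring_def)
  have inj: "inj int" by (auto simp: inj_def)
  have "(\<lambda>j. if j \<in> range int then Ag (inv int j) else {0}) = Agz Ag"
  proof
    fix j :: int
    show "(if j \<in> range int then Ag (inv int j) else {0}) = Agz Ag j"
    proof (cases "0 \<le> j")
      case True
      then have "j \<in> range int" by (metis nonneg_int_cases rangeI)
      moreover have "inv int j = nat j" by (rule inv_f_eq[OF inj]) (use True in simp)
      ultimately show ?thesis using True by (simp add: Agz_def)
    qed (auto simp: Agz_def)
  qed
  then show ?thesis using gdec_reindex[OF g inj] by simp
qed

lemma comp_shift:
  fixes G :: "int \<Rightarrow> 'm::ab_group_add set"
  assumes "gdec G" shows "comp (\<lambda>n. G (n - d)) x n = comp G x (n - d)"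
proof -
  interpret g: gdec G by fact
  interpret g': gdec "\<lambda>n. G (n - d)" using gdec_shift[OF assms] .
  have "comp (\<lambda>n. G (n - d)) x = (\<lambda>n. comp G x (n - d))"
  proof (rule g'.comp_eq)
    show "\<And>i. comp G x (i - d) \<in> G (i - d)" by simp
    have eq: "{i. comp G x (i - d) \<noteq> 0} = (\<lambda>i. i + d) ` {i. comp G x i \<noteq> 0}"
      by (auto simp: image_iff) (metis diff_add_cancel)
    show "finite {i. comp G x (i - d) \<noteq> 0}" unfolding eq by simp
    have "(\<Sum>i\<in>{i. comp G x (i - d) \<noteq> 0}. comp G x (i - d)) = (\<Sum>i\<in>{i. comp G x i \<noteq> 0}. comp G x i)"
      unfolding eq by (subst sum.reindex) (auto simp: inj_on_def)
    then show "x = (\<Sum>i\<in>{i. comp G x (i - d) \<noteq> 0}. comp G x (i - d))" using g.comp_sum_supp by simp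
  qed
  then show ?thesis by simp
qed

lemma Agz_mult: assumes "graded_ring Ag" "a \<in> Agz Ag i" "b \<in> Agz Ag j" shows "a * b \<in> Agz Ag (i + j)"
proof (cases "i \<ge> 0 \<and> j \<ge> 0")
  case True
  moreover have "\<forall>i j. \<forall>x\<in>Ag i. \<forall>y\<in>Ag j. x * y \<in> Ag (i + j)" using assms(1) by (simp add: graded_ring_def)
  ultimately have "a * b \<in> Ag (nat i + nat j)" using assms(2,3) by (simp add: Agz_def)
  then show ?thesis using True by (simp add: Agz_def nat_add_distrib)
next
  case False then have "a = 0 \<or> b = 0" using assms by (auto simp: Agz_def split: if_splits)
  moreover have "0 \<in> Agz Ag (i + j)" using assms(1)
    by (auto simp: Agz_def graded_ring_def add_subgroup_def)
  ultimately show ?thesis by auto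
qed

lemma one_Agz: "graded_ring Ag \<Longrightarrow> 1 \<in> Agz Ag 0"
  by (simp add: graded_ring_def Agz_def)

lemma Agz_nat: "graded_ring Ag \<Longrightarrow> a \<in> Ag i \<Longrightarrow> a \<in> Agz Ag (int i)"
  by (simp add: Agz_def)

locale gmod =
  fixes Ag :: "nat \<Rightarrow> 'a::comm_ring_1 set" and sm :: "'a \<Rightarrow> 'm::ab_group_add \<Rightarrow> 'm"
    and Mg :: "int \<Rightarrow> 'm set"
  assumes ring: "graded_ring Ag" and gm: "graded_module Ag sm Mg"
begin

sublocale gdec Mg using gm by unfold_locales (auto simp: graded_module_def)
sublocale A: gdec "Agz Ag" using gdec_Agz[OF ring] .

lemma sm_add_left: "sm (a + b) x = sm a x + sm b x" using gm by (simp add: graded_module_def)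
lemma sm_add_right: "sm a (x + y) = sm a x + sm a y" using gm by (simp add: graded_module_def)
lemma sm_mult: "sm (a * b) x = sm a (sm b x)" using gm by (simp add: graded_module_def)
lemma sm_one[simp]: "sm 1 x = x" using gm by (simp add: graded_module_def)
lemma sm_zero_left[simp]: "sm 0 x = 0" using sm_add_left[of 0 0 x] by simp
lemma sm_zero_right[simp]: "sm a 0 = 0" using sm_add_right[of a 0 0] by simp
lemma sm_minus_left: "sm (- a) x = - sm a x"
  using sm_add_left[of a "-a" x] by (simp add: eq_neg_iff_add_eq_0 add.commute)
lemma sm_minus_right: "sm a (- x) = - sm a x"
  using sm_add_right[of a x "-x"] by (simp add: eq_neg_iff_add_eq_0 add.commute)
lemma sm_diff_left: "sm (a - b) x = sm a x - sm b x"
  using sm_add_left[of a "-b" x] sm_minus_left[of b x] by simp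
lemma sm_diff_right: "sm a (x - y) = sm a x - sm a y"
  using sm_add_right[of a x "-y"] sm_minus_right[of a y] by simp
lemma sm_sum_left: "sm (\<Sum>i\<in>I. f i) x = (\<Sum>i\<in>I. sm (f i) x)"
  by (induction I rule: infinite_finite_induct) (auto simp: sm_add_left)
lemma sm_sum_right: "sm a (\<Sum>i\<in>I. f i) = (\<Sum>i\<in>I. sm a (f i))"
  by (induction I rule: infinite_finite_induct) (auto simp: sm_add_right)
lemma sm_comm: "sm a (sm b x) = sm b (sm a x)"
  by (metis sm_mult mult.commute)

lemma sm_deg_nat: "a \<in> Ag i \<Longrightarrow> x \<in> Mg n \<Longrightarrow> sm a x \<in> Mg (int i + n)"
proof -
  have "\<forall>i n. \<forall>a\<in>Ag i. \<forall>x\<in>Mg n. sm a x \<in> Mg (int i + n)" using gm by (simp add: graded_module_def)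
  then show "a \<in> Ag i \<Longrightarrow> x \<in> Mg n \<Longrightarrow> sm a x \<in> Mg (int i + n)" by blast
qed

lemma sm_deg: assumes "a \<in> Agz Ag j" "x \<in> Mg n" shows "sm a x \<in> Mg (j + n)"
proof (cases "j \<ge> 0")
  case True
  then have "a \<in> Ag (nat j)" using assms by (simp add: Agz_def)
  then have "sm a x \<in> Mg (int (nat j) + n)" using assms(2) by (rule sm_deg_nat)
  then show ?thesis using True by simp
next
  case False then show ?thesis using assms by (simp add: Agz_def)
qed

lemma sm_comp: assumes "x \<in> Mg n" shows "comp Mg (sm a x) t = sm (comp (Agz Ag) a (t - n)) x"
proof -
  let ?D = "{j. comp (Agz Ag) a j \<noteq> 0}"
  have "sm a x = (\<Sum>j\<in>?D. sm (comp (Agz Ag) a j) x)"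
    using A.comp_sum_supp[of a] sm_sum_left by metis
  then have "comp Mg (sm a x) ((t - n) + n) = sm (comp (Agz Ag) a (t - n)) x"
    by (intro comp_reindex'[where D="?D"]) (auto simp: inj_def intro: sm_deg assms)
  then show ?thesis by simp
qed

lemma graded_module_shift: "graded_module Ag sm (\<lambda>n. Mg (n - d))"
proof -
  have "gdec (\<lambda>n. Mg (n - d))" by (rule gdec_shift) unfold_locales
  then have "dsum_decomp (\<lambda>n. Mg (n - d))" by (simp add: gdec_def)
  moreover have "sm a x \<in> Mg (int i + n - d)" if "a \<in> Ag i" "x \<in> Mg (n - d)" for a x i n
    using sm_deg_nat[OF that] by (simp add: algebra_simps)
  moreover have "\<forall>n. add_subgroup (Mg (n - d))" using sub by blast
  ultimately show ?thesis unfolding graded_module_def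
    by (intro conjI allI ballI sm_add_left sm_add_right sm_mult sm_one) auto
qed

lemma gmod_shift: "gmod Ag sm (\<lambda>n. Mg (n - d))"
  using graded_module_shift ring by unfold_locales

lemma gsub_iff: "graded_submodule sm Mg S \<longleftrightarrow>
   add_subgroup S \<and> (\<forall>a. \<forall>x\<in>S. sm a x \<in> S) \<and> (\<forall>x\<in>S. \<forall>n. comp Mg x n \<in> S)"
proof
  assume S: "graded_submodule sm Mg S"
  note S' = S[unfolded graded_submodule_def]
  note S1 = S'[THEN conjunct1] S'[THEN conjunct2, THEN conjunct1]
  note S2 = S'[THEN conjunct2, THEN conjunct2]
  have "comp Mg x n \<in> S" if "x \<in> S" for x n
  proof -
    from bspec[OF S2 that] obtain c where
      c: "(\<forall>n. c n \<in> S \<inter> Mg n) \<and> finite {n. c n \<noteq> 0} \<and> x = (\<Sum>n\<in>{n. c n \<noteq> 0}. c n)"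
      by (rule exE)
    have "\<And>i. c i \<in> Mg i" using c by blast
    then have "comp Mg x = c" using c[THEN conjunct2, THEN conjunct1] c[THEN conjunct2, THEN conjunct2] by (rule comp_eq)
    then show ?thesis using c[THEN conjunct1] by simp
  qed
  then show "add_subgroup S \<and> (\<forall>a. \<forall>x\<in>S. sm a x \<in> S) \<and> (\<forall>x\<in>S. \<forall>n. comp Mg x n \<in> S)"
    using S1 by (intro conjI) auto
next
  assume A0: "add_subgroup S \<and> (\<forall>a. \<forall>x\<in>S. sm a x \<in> S) \<and> (\<forall>x\<in>S. \<forall>n. comp Mg x n \<in> S)"
  note A = A0[THEN conjunct1] A0[THEN conjunct2, THEN conjunct1] A0[THEN conjunct2, THEN conjunct2]
  have "\<exists>c. (\<forall>n. c n \<in> S \<inter> Mg n) \<and> finite {n. c n \<noteq> 0} \<and> x = (\<Sum>n\<in>{n. c n \<noteq> 0}. c n)"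
    if "x \<in> S" for x
  proof (rule exI[of _ "comp Mg x"], intro conjI allI)
    show "comp Mg x n \<in> S \<inter> Mg n" for n using A(3) that by simp
  qed (simp_all add: comp_sum_supp[symmetric])
  then show "graded_submodule sm Mg S" unfolding graded_submodule_def using A(1,2) by (intro conjI) auto
qed

lemma gsubI: "0 \<in> S \<Longrightarrow> (\<And>x y. x \<in> S \<Longrightarrow> y \<in> S \<Longrightarrow> x + y \<in> S) \<Longrightarrow>
  (\<And>a x. x \<in> S \<Longrightarrow> sm a x \<in> S) \<Longrightarrow> (\<And>x n. x \<in> S \<Longrightarrow> comp Mg x n \<in> S) \<Longrightarrow> graded_submodule sm Mg S"
proof -
  assume a: "0 \<in> S" "\<And>x y. x \<in> S \<Longrightarrow> y \<in> S \<Longrightarrow> x + y \<in> S"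
    "\<And>a x. x \<in> S \<Longrightarrow> sm a x \<in> S" "\<And>x n. x \<in> S \<Longrightarrow> comp Mg x n \<in> S"
  have "- x \<in> S" if "x \<in> S" for x using a(3)[OF that, of "-1"] by (simp add: sm_minus_left)
  then show ?thesis unfolding gsub_iff add_subgroup_def using a by blast
qed

lemma gsub_0: "graded_submodule sm Mg S \<Longrightarrow> 0 \<in> S" by (simp add: gsub_iff add_subgroup_def)
lemma gsub_add: "graded_submodule sm Mg S \<Longrightarrow> x \<in> S \<Longrightarrow> y \<in> S \<Longrightarrow> x + y \<in> S" by (simp add: gsub_iff add_subgroup_def)
lemma gsub_uminus: "graded_submodule sm Mg S \<Longrightarrow> x \<in> S \<Longrightarrow> - x \<in> S" by (simp add: gsub_iff add_subgroup_def)
lemma gsub_diff: "graded_submodule sm Mg S \<Longrightarrow> x \<in> S \<Longrightarrow> y \<in> S \<Longrightarrow> x - y \<in> S"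
  by (metis gsub_add gsub_uminus diff_conv_add_uminus)
lemma gsub_sm: "graded_submodule sm Mg S \<Longrightarrow> x \<in> S \<Longrightarrow> sm a x \<in> S" by (simp add: gsub_iff)
lemma gsub_comp: "graded_submodule sm Mg S \<Longrightarrow> x \<in> S \<Longrightarrow> comp Mg x n \<in> S" by (simp add: gsub_iff)
lemma gsub_sum: "graded_submodule sm Mg S \<Longrightarrow> (\<And>i. i \<in> I \<Longrightarrow> f i \<in> S) \<Longrightarrow> sum f I \<in> S"
  using add_subgroup_sum gsub_iff by blast

lemma gsub_UNIV: "graded_submodule sm Mg UNIV" by (rule gsubI) auto
lemma gsub_zero: "graded_submodule sm Mg {0}" by (rule gsubI) auto

lemma gsub_cyclic: assumes "x \<in> Mg s" shows "graded_submodule sm Mg {sm a x | a. True}"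
proof (rule gsubI)
  show "0 \<in> {sm a x |a. True}" by (rule CollectI, rule exI[of _ 0]) simp
  show "y + z \<in> {sm a x |a. True}" if "y \<in> {sm a x |a. True}" "z \<in> {sm a x |a. True}" for y z
    using that by (auto simp: sm_add_left[symmetric])
  show "sm b y \<in> {sm a x |a. True}" if "y \<in> {sm a x |a. True}" for b y
    using that by (auto simp: sm_mult[symmetric])
  show "comp Mg y n \<in> {sm a x |a. True}" if "y \<in> {sm a x |a. True}" for y n
    using that by (auto simp: sm_comp[OF assms])
qed

lemma gsub_plus: assumes "graded_submodule sm Mg S" "graded_submodule sm Mg T"
  shows "graded_submodule sm Mg {s + t | s t. s \<in> S \<and> t \<in> T}"
proof (rule gsubI)
  have "0 + 0 \<in> {s + t |s t. s \<in> S \<and> t \<in> T}"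
    using gsub_0[OF assms(1)] gsub_0[OF assms(2)] by blast
  then show "0 \<in> {s + t |s t. s \<in> S \<and> t \<in> T}" by simp
  show "x + y \<in> {s + t |s t. s \<in> S \<and> t \<in> T}" if hxy: "x \<in> {s + t |s t. s \<in> S \<and> t \<in> T}" "y \<in> {s + t |s t. s \<in> S \<and> t \<in> T}" for x y
  proof -
    obtain s t s' t' where st: "x = s + t" "y = s' + t'" "s \<in> S" "t \<in> T" "s' \<in> S" "t' \<in> T" using hxy by blast
    have "x + y = (s + s') + (t + t')" using st(1,2) by (simp add: algebra_simps)
    moreover have "s + s' \<in> S" "t + t' \<in> T" using st gsub_add[OF assms(1)] gsub_add[OF assms(2)] by auto
    ultimately show ?thesis by blast
  qed
  show "sm a x \<in> {s + t |s t. s \<in> S \<and> t \<in> T}" if hx: "x \<in> {s + t |s t. s \<in> S \<and> t \<in> T}" for a x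
  proof -
    obtain s t where st: "x = s + t" "s \<in> S" "t \<in> T" using hx by blast
    have "sm a x = sm a s + sm a t" using st(1) by (simp add: sm_add_right)
    moreover have "sm a s \<in> S" "sm a t \<in> T" using st gsub_sm[OF assms(1)] gsub_sm[OF assms(2)] by auto
    ultimately show ?thesis by blast
  qed
  show "comp Mg x n \<in> {s + t |s t. s \<in> S \<and> t \<in> T}" if hx: "x \<in> {s + t |s t. s \<in> S \<and> t \<in> T}" for x n
  proof -
    obtain s t where st: "x = s + t" "s \<in> S" "t \<in> T" using hx by blast
    have "comp Mg x n = comp Mg s n + comp Mg t n" using st(1) by (simp add: comp_add)
    moreover have "comp Mg s n \<in> S" "comp Mg t n \<in> T" using st gsub_comp[OF assms(1)] gsub_comp[OF assms(2)] by auto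
    ultimately show ?thesis by blast
  qed
qed

lemma gsub_chain: assumes "C \<noteq> {}" "\<And>S. S \<in> C \<Longrightarrow> graded_submodule sm Mg S"
  "\<And>S T. S \<in> C \<Longrightarrow> T \<in> C \<Longrightarrow> S \<subseteq> T \<or> T \<subseteq> S"
  shows "graded_submodule sm Mg (\<Union>C)"
proof (rule gsubI)
  obtain S0 where "S0 \<in> C" using assms(1) by blast
  then have "0 \<in> S0" by (intro gsub_0 assms(2))
  then show "0 \<in> \<Union>C" using \<open>S0 \<in> C\<close> by (rule UnionI[rotated])
  show "x + y \<in> \<Union>C" if hxy: "x \<in> \<Union>C" "y \<in> \<Union>C" for x y
  proof -
    obtain S T where ST: "S \<in> C" "T \<in> C" "x \<in> S" "y \<in> T" using hxy by blast
    from assms(3)[OF ST(1,2)] show ?thesis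
    proof
      assume "S \<subseteq> T"
      then have "x + y \<in> T" using ST by (intro gsub_add[OF assms(2)]) auto
      then show ?thesis using ST(2) by (rule UnionI[rotated])
    next
      assume "T \<subseteq> S"
      then have "x + y \<in> S" using ST by (intro gsub_add[OF assms(2)]) auto
      then show ?thesis using ST(1) by (rule UnionI[rotated])
    qed
  qed
  show "sm a x \<in> \<Union>C" if hx: "x \<in> \<Union>C" for a x
  proof -
    obtain S where "S \<in> C" "x \<in> S" using hx by blast
    then show ?thesis using gsub_sm[OF assms(2)[OF \<open>S \<in> C\<close>]] by blast
  qed
  show "comp Mg x n \<in> \<Union>C" if hx: "x \<in> \<Union>C" for x n
  proof -
    obtain S where "S \<in> C" "x \<in> S" using hx by blast
    then show ?thesis using gsub_comp[OF assms(2)[OF \<open>S \<in> C\<close>]] by blast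
  qed
qed

lemma gsub_ex_hom_notin: assumes "graded_submodule sm Mg S" "S \<noteq> UNIV"
  shows "\<exists>x n. x \<in> Mg n \<and> x \<notin> S"
proof -
  obtain y where "y \<notin> S" using assms(2) by blast
  have "\<exists>n. comp Mg y n \<notin> S"
  proof (rule ccontr)
    assume "\<not> ?thesis"
    then have "(\<Sum>i\<in>{i. comp Mg y i \<noteq> 0}. comp Mg y i) \<in> S" by (intro gsub_sum[OF assms(1)]) simp
    then show False using comp_sum_supp[of y] \<open>y \<notin> S\<close> by simp
  qed
  then obtain n where "comp Mg y n \<notin> S" ..
  moreover have "comp Mg y n \<in> Mg n" by (rule comp_in)
  ultimately show ?thesis by blast
qed
end

lemma gm_ring_shift: assumes "graded_ring Ag" shows "graded_module Ag (*) (\<lambda>n. Agz Ag (n - s))"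
proof -
  have "graded_module Ag (*) (Agz Ag)"
    unfolding graded_module_def
  proof (intro conjI allI ballI)
    show "add_subgroup (Agz Ag n)" for n using gdec.sub[OF gdec_Agz[OF assms]] .
    show "dsum_decomp (Agz Ag)" using gdec.dec[OF gdec_Agz[OF assms]] .
    show "a * x \<in> Agz Ag (int i + n)" if "a \<in> Ag i" "x \<in> Agz Ag n" for a x i n
      using Agz_mult[OF assms Agz_nat[OF assms that(1)] that(2)] .
  qed (simp_all add: distrib_right distrib_left mult.assoc)
  then interpret gmod Ag "(*)" "Agz Ag" using assms by unfold_locales
  show ?thesis by (rule graded_module_shift)
qed

lemma gmod_ring_shift: "graded_ring Ag \<Longrightarrow> gmod Ag (*) (\<lambda>n. Agz Ag (n - s))"
  using gm_ring_shift by unfold_locales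

lemma gr_hom_add: "gr_hom sm Mg sn Ng d f \<Longrightarrow> f (x + y) = f x + f y" by (simp add: gr_hom_def)
lemma gr_hom_sm: "gr_hom sm Mg sn Ng d f \<Longrightarrow> f (sm a x) = sn a (f x)" by (simp add: gr_hom_def)
lemma gr_hom_deg: "gr_hom sm Mg sn Ng d f \<Longrightarrow> x \<in> Mg n \<Longrightarrow> f x \<in> Ng (n + d)" unfolding gr_hom_def by blast
lemma gr_hom_0: "gr_hom sm Mg sn Ng d f \<Longrightarrow> f 0 = 0" using gr_hom_add[of sm Mg sn Ng d f 0 0] by simp
lemma gr_hom_uminus: "gr_hom sm Mg sn Ng d f \<Longrightarrow> f (- x) = - f x"
  using gr_hom_add[of sm Mg sn Ng d f x "-x"] gr_hom_0[of sm Mg sn Ng d f]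
  by (simp add: eq_neg_iff_add_eq_0 add.commute)
lemma gr_hom_diff: "gr_hom sm Mg sn Ng d f \<Longrightarrow> f (x - y) = f x - f y"
  using gr_hom_add[of sm Mg sn Ng d f x "-y"] gr_hom_uminus[of sm Mg sn Ng d f y] by simp
lemma gr_hom_sum: "gr_hom sm Mg sn Ng d f \<Longrightarrow> f (\<Sum>i\<in>I. g i) = (\<Sum>i\<in>I. f (g i))"
  by (induction I rule: infinite_finite_induct) (auto simp: gr_hom_0 gr_hom_add)

lemma gr_hom_shift: "gr_hom sm Mg sn Ng d f \<longleftrightarrow> gr_hom sm (\<lambda>n. Mg (n - d)) sn Ng 0 f"
  unfolding gr_hom_def
proof (intro iffI conjI; (elim conjE)?)
  assume "\<forall>n. f ` Mg n \<subseteq> Ng (n + d)"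
  then show "\<forall>n. f ` Mg (n - d) \<subseteq> Ng (n + 0)" by (metis add.right_neutral diff_add_cancel)
next
  assume "\<forall>n. f ` Mg (n - d) \<subseteq> Ng (n + 0)"
  then show "\<forall>n. f ` Mg n \<subseteq> Ng (n + d)" by (metis add.right_neutral add_diff_cancel)
qed auto

lemma hom_on_add: "hom_on S sn Ng se Eg f \<Longrightarrow> x \<in> S \<Longrightarrow> y \<in> S \<Longrightarrow> f (x + y) = f x + f y"
  by (simp add: hom_on_def)
lemma hom_on_sm: "hom_on S sn Ng se Eg f \<Longrightarrow> x \<in> S \<Longrightarrow> f (sn a x) = se a (f x)"
  by (simp add: hom_on_def)
lemma hom_on_deg: "hom_on S sn Ng se Eg f \<Longrightarrow> x \<in> S \<Longrightarrow> x \<in> Ng n \<Longrightarrow> f x \<in> Eg n"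
  unfolding hom_on_def by blast

lemma hom_on_UNIV: "hom_on UNIV sn Ng se Eg f \<Longrightarrow> gr_hom sn Ng se Eg 0 f"
  by (simp add: hom_on_def gr_hom_def)

lemma gr_hom_hom_on: assumes "gr_hom sn Ng se Eg 0 f" shows "hom_on S sn Ng se Eg f"
  unfolding hom_on_def
proof (intro conjI ballI allI)
  show "f (x + y) = f x + f y" for x y using gr_hom_add[OF assms] .
  show "f (sn a x) = se a (f x)" for a x using gr_hom_sm[OF assms] .
  show "f ` (S \<inter> Ng n) \<subseteq> Eg n" for n using gr_hom_deg[OF assms, of _ n] by auto
qed

locale gmod2 = M: gmod Ag sm Mg + N: gmod Ag sn Ng
  for Ag :: "nat \<Rightarrow> 'a::comm_ring_1 set" and sm :: "'a \<Rightarrow> 'm::ab_group_add \<Rightarrow> 'm" and Mg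
    and sn :: "'a \<Rightarrow> 'n::ab_group_add \<Rightarrow> 'n" and Ng
begin

lemma hom_on_0: "hom_on S sm Mg sn Ng f \<Longrightarrow> graded_submodule sm Mg S \<Longrightarrow> f 0 = 0"
  using hom_on_add[of S sm Mg sn Ng f 0 0] M.gsub_0 by simp

lemma hom_on_uminus: "hom_on S sm Mg sn Ng f \<Longrightarrow> graded_submodule sm Mg S \<Longrightarrow> x \<in> S \<Longrightarrow> f (- x) = - f x"
  using hom_on_sm[of S sm Mg sn Ng f x "-1"] M.sm_minus_left N.sm_minus_left by simp

lemma hom_on_diff: "hom_on S sm Mg sn Ng f \<Longrightarrow> graded_submodule sm Mg S \<Longrightarrow> x \<in> S \<Longrightarrow> y \<in> S \<Longrightarrow> f (x - y) = f x - f y"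
  using hom_on_add[of S sm Mg sn Ng f x "-y"] hom_on_uminus[of S f y] M.gsub_uminus by simp

lemma gr_hom_comp: assumes "gr_hom sm Mg sn Ng d f"
  shows "comp Ng (f x) (n + d) = f (comp Mg x n)"
proof -
  let ?D = "{i. comp Mg x i \<noteq> 0}"
  have "f x = (\<Sum>i\<in>?D. f (comp Mg x i))"
    using gr_hom_sum[OF assms] M.comp_sum_supp[of x] by metis
  then show ?thesis
    by (intro N.comp_reindex'[where D="?D" and h="\<lambda>i. i + d"])
       (auto simp: inj_def gr_hom_0[OF assms] intro: gr_hom_deg[OF assms])
qed

lemma gr_hom_comp': assumes "gr_hom sm Mg sn Ng d f"
  shows "comp Ng (f x) n = f (comp Mg x (n - d))"
  using gr_hom_comp[OF assms, of x "n - d"] by simp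

lemma gsub_ker: assumes "gr_hom sm Mg sn Ng d f" shows "graded_submodule sm Mg {x. f x = 0}"
  by (rule M.gsubI) (auto simp: gr_hom_0[OF assms] gr_hom_add[OF assms] gr_hom_sm[OF assms]
      gr_hom_comp[OF assms, symmetric])

lemma gsub_range: assumes "gr_hom sm Mg sn Ng d f" shows "graded_submodule sn Ng (range f)"
proof (rule N.gsubI)
  show "0 \<in> range f" using gr_hom_0[OF assms] by (metis rangeI)
  show "x + y \<in> range f" if hx: "x \<in> range f" "y \<in> range f" for x y
    using hx by (auto simp: gr_hom_add[OF assms, symmetric])
  show "sn a x \<in> range f" if hx: "x \<in> range f" for a x
    using hx by (auto simp: gr_hom_sm[OF assms, symmetric])
  show "comp Ng x n \<in> range f" if hx: "x \<in> range f" for x n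
    using hx by (auto simp: gr_hom_comp'[OF assms])
qed

end

lemma ext_step:
  fixes se :: "'a::comm_ring_1 \<Rightarrow> 'e::ab_group_add \<Rightarrow> 'e" and sn :: "'a \<Rightarrow> 'u::ab_group_add \<Rightarrow> 'u"
  assumes E: "gmod Ag se Eg" and inj: "gr_injective TYPE('a) Ag se Eg" and N: "gmod Ag sn Ng"
    and T: "graded_submodule sn Ng T" and h: "hom_on T sn Ng se Eg h" and x: "x \<in> Ng s" "x \<notin> T"
  shows "\<exists>T' h'. graded_submodule sn Ng T' \<and> T \<subseteq> T' \<and> x \<in> T' \<and> hom_on T' sn Ng se Eg h' \<and> (\<forall>z\<in>T. h' z = h z)"
proof -
  interpret E: gmod Ag se Eg by fact
  interpret N: gmod Ag sn Ng by fact
  interpret NE: gmod2 Ag sn Ng se Eg by unfold_locales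
  define Ng' where "Ng' n = Agz Ag (n - s)" for n
  interpret R: gmod Ag "(*)" Ng' unfolding Ng'_def by (rule gmod_ring_shift[OF N.ring])
  interpret RE: gmod2 Ag "(*)" Ng' se Eg by unfold_locales
  define I where "I = {a. sn a x \<in> T}"
  have compR: "comp Ng' a n = comp (Agz Ag) a (n - s)" for a n
    unfolding Ng'_def by (rule comp_shift) (rule gdec_Agz[OF N.ring])
  have I: "graded_submodule (*) Ng' I"
  proof (rule R.gsubI)
    show "0 \<in> I" using N.gsub_0[OF T] by (simp add: I_def)
    show "a + b \<in> I" if "a \<in> I" "b \<in> I" for a b
      using that N.gsub_add[OF T] by (simp add: I_def N.sm_add_left)
    show "b * a \<in> I" if "a \<in> I" for a b
      using that N.gsub_sm[OF T] by (simp add: I_def N.sm_mult)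
    show "comp Ng' a n \<in> I" if "a \<in> I" for a n
      using that N.gsub_comp[OF T, of "sn a x" n] by (simp add: I_def compR N.sm_comp[OF x(1)])
  qed
  have hI: "hom_on I (*) Ng' se Eg (\<lambda>a. h (sn a x))"
    unfolding hom_on_def
  proof (intro conjI ballI allI)
    show "h (sn (a + b) x) = h (sn a x) + h (sn b x)" if "a \<in> I" "b \<in> I" for a b
      using that hom_on_add[OF h] by (simp add: I_def N.sm_add_left)
    show "h (sn (b * a) x) = se b (h (sn a x))" if "a \<in> I" for a b
      using that hom_on_sm[OF h] by (simp add: I_def N.sm_mult)
    show "(\<lambda>a. h (sn a x)) ` (I \<inter> Ng' n) \<subseteq> Eg n" for n
    proof
      fix w assume "w \<in> (\<lambda>a. h (sn a x)) ` (I \<inter> Ng' n)"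
      then obtain a where a: "a \<in> I" "a \<in> Agz Ag (n - s)" and w: "w = h (sn a x)" by (auto simp: Ng'_def)
      have "sn a x \<in> Ng (n - s + s)" by (rule N.sm_deg[OF a(2) x(1)])
      then show "w \<in> Eg n" using a(1) w hom_on_deg[OF h] by (simp add: I_def)
    qed
  qed
  have "graded_module Ag (*) Ng'" by (rule R.gm)
  then obtain g where g: "gr_hom (*) Ng' se Eg 0 g" and gI: "\<forall>a\<in>I. g a = h (sn a x)"
    using inj I hI unfolding gr_injective_def by blast
  define y where "y = g 1"
  have gy: "g a = se a y" for a using gr_hom_sm[OF g, of a 1] by (simp add: y_def)
  have y: "y \<in> Eg s"
  proof -
    have "1 \<in> Ng' s" using one_Agz[OF N.ring] by (simp add: Ng'_def)
    then show ?thesis using gr_hom_deg[OF g] by (simp add: y_def)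
  qed
  have h0: "h 0 = 0" by (rule NE.hom_on_0[OF h T])
  have wd: "h t + se a y = h t' + se a' y" if "t \<in> T" "t' \<in> T" "t + sn a x = t' + sn a' x" for t t' a a'
  proof -
    have "sn (a - a') x = t' - t" using that(3) by (simp add: N.sm_diff_left algebra_simps)
    then have "a - a' \<in> I" using N.gsub_diff[OF T that(2,1)] by (simp add: I_def)
    then have "h (sn (a - a') x) = se (a - a') y" using gI gy by simp
    moreover have "h (t' - t) = h t' - h t" by (rule NE.hom_on_diff[OF h T that(2,1)])
    ultimately have "h t' - h t = se a y - se a' y" using \<open>sn (a - a') x = t' - t\<close> by (simp add: E.sm_diff_left)
    then show ?thesis by (simp add: algebra_simps)
  qed
  define C where "C = {sn a x | a. True}"
  define T' where "T' = {t + c | t c. t \<in> T \<and> c \<in> C}"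
  have T': "graded_submodule sn Ng T'"
    unfolding T'_def C_def by (rule N.gsub_plus[OF T N.gsub_cyclic[OF x(1)]])
  have memT': "z \<in> T' \<longleftrightarrow> (\<exists>t a. t \<in> T \<and> z = t + sn a x)" for z
    unfolding T'_def C_def by blast
  define h' where "h' z = (SOME w. \<exists>t a. t \<in> T \<and> z = t + sn a x \<and> w = h t + se a y)" for z
  have h'eq: "h' (t + sn a x) = h t + se a y" if "t \<in> T" for t a
  proof -
    define P where "P w = (\<exists>t' a'. t' \<in> T \<and> t + sn a x = t' + sn a' x \<and> w = h t' + se a' y)" for w
    have "P (h t + se a y)" using that unfolding P_def by blast
    then have "P (h' (t + sn a x))" unfolding h'_def P_def by (rule someI)
    then have "\<exists>t' a'. t' \<in> T \<and> t + sn a x = t' + sn a' x \<and> h' (t + sn a x) = h t' + se a' y"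
      unfolding P_def .
    then obtain t' a' where "t' \<in> T" "t + sn a x = t' + sn a' x" "h' (t + sn a x) = h t' + se a' y" by blast
    then show ?thesis using wd[OF that] by simp
  qed
  have hT: "h' z = h z" if "z \<in> T" for z using h'eq[OF that, of 0] by simp
  have hom': "hom_on T' sn Ng se Eg h'"
    unfolding hom_on_def
  proof (intro conjI ballI allI)
    show "h' (z1 + z2) = h' z1 + h' z2" if hz: "z1 \<in> T'" "z2 \<in> T'" for z1 z2
    proof -
      obtain t1 a1 t2 a2 where t: "t1 \<in> T" "t2 \<in> T" "z1 = t1 + sn a1 x" "z2 = t2 + sn a2 x"
        using hz memT' by meson
      have "z1 + z2 = (t1 + t2) + sn (a1 + a2) x" using t(3,4) by (simp add: N.sm_add_left algebra_simps)
      then have "h' (z1 + z2) = h (t1 + t2) + se (a1 + a2) y" using h'eq N.gsub_add[OF T t(1,2)] by simp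
      also have "\<dots> = h' z1 + h' z2" using t h'eq hom_on_add[OF h t(1,2)] by (simp add: E.sm_add_left algebra_simps)
      finally show ?thesis .
    qed
    show "h' (sn b z) = se b (h' z)" if hz: "z \<in> T'" for b z
    proof -
      obtain t a where t: "t \<in> T" "z = t + sn a x" using hz memT' by meson
      have "sn b z = sn b t + sn (b * a) x" using t(2) by (simp add: N.sm_add_right N.sm_mult)
      then have "h' (sn b z) = h (sn b t) + se (b * a) y" using h'eq N.gsub_sm[OF T t(1)] by simp
      also have "\<dots> = se b (h' z)" using t h'eq hom_on_sm[OF h t(1)] by (simp add: E.sm_add_right E.sm_mult)
      finally show ?thesis .
    qed
    show "h' ` (T' \<inter> Ng n) \<subseteq> Eg n" for n
    proof
      fix w assume "w \<in> h' ` (T' \<inter> Ng n)"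
      then obtain z where z: "z \<in> T'" "z \<in> Ng n" "w = h' z" by blast
      obtain t a where t: "t \<in> T" "z = t + sn a x" using z(1) memT' by meson
      have "z = comp Ng z n" using z(2) by (simp add: N.comp_hom)
      also have "\<dots> = comp Ng t n + sn (comp (Agz Ag) a (n - s)) x"
        using t(2) by (simp add: N.comp_add N.sm_comp[OF x(1)])
      finally have zz: "z = comp Ng t n + sn (comp (Agz Ag) a (n - s)) x" .
      have ct: "comp Ng t n \<in> T" by (rule N.gsub_comp[OF T t(1)])
      have "w = h (comp Ng t n) + se (comp (Agz Ag) a (n - s)) y"
        using z(3) zz h'eq[OF ct] by simp
      moreover have "h (comp Ng t n) \<in> Eg n" using hom_on_deg[OF h ct N.comp_in] .
      moreover have "se (comp (Agz Ag) a (n - s)) y \<in> Eg (n - s + s)"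
        by (rule E.sm_deg[OF E.A.comp_in y])
      ultimately show "w \<in> Eg n" using add_subgroup_add[OF E.sub] by simp
    qed
  qed
  have "T \<subseteq> T'" using memT'[of "_"] by (metis N.sm_zero_left add.right_neutral subsetI)
  moreover have "x \<in> T'" using memT'[of x] N.gsub_0[OF T] by (metis N.sm_one add.left_neutral)
  ultimately show ?thesis using T' hom' hT by blast
qed

lemma zorn_ne: assumes "X0 \<in> A" "\<And>C. C \<in> chains A \<Longrightarrow> C \<noteq> {} \<Longrightarrow> \<Union>C \<in> A"
  shows "\<exists>M\<in>A. \<forall>X\<in>A. M \<subseteq> X \<longrightarrow> X = M"
proof (rule Zorn_Lemma2, rule ballI)
  fix C assume C: "C \<in> chains A"
  show "\<exists>U\<in>A. \<forall>X\<in>C. X \<subseteq> U"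
  proof (cases "C = {}")
    case True then show ?thesis using assms(1) by blast
  next
    case False then show ?thesis using assms(2)[OF C] by blast
  qed
qed

definition gfun :: "('u \<times> 'e) set \<Rightarrow> 'u \<Rightarrow> 'e" where "gfun G z = (THE w. (z, w) \<in> G)"
definition functional :: "('u \<times> 'e) set \<Rightarrow> bool" where
  "functional G \<longleftrightarrow> (\<forall>z w w'. (z, w) \<in> G \<longrightarrow> (z, w') \<in> G \<longrightarrow> w = w')"

lemma gfun_eq: "functional G \<Longrightarrow> (z, w) \<in> G \<Longrightarrow> gfun G z = w"
  unfolding gfun_def functional_def by blast

lemma gfun_in: "functional G \<Longrightarrow> z \<in> Domain G \<Longrightarrow> (z, gfun G z) \<in> G"
  using gfun_eq by fastforce

definition graph :: "'u set \<Rightarrow> ('u \<Rightarrow> 'e) \<Rightarrow> ('u \<times> 'e) set" where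
  "graph T h = {(z, h z) | z. z \<in> T}"

lemma graph_functional: "functional (graph T h)" by (auto simp: graph_def functional_def)
lemma graph_Domain: "Domain (graph T h) = T" by (auto simp: graph_def)
lemma graph_gfun: "z \<in> T \<Longrightarrow> gfun (graph T h) z = h z"
  by (rule gfun_eq[OF graph_functional]) (auto simp: graph_def)

lemma hom_on_cong: assumes "hom_on T sn Ng se Eg h" "\<And>z. z \<in> T \<Longrightarrow> h' z = h z"
  "\<And>x y. x \<in> T \<Longrightarrow> y \<in> T \<Longrightarrow> x + y \<in> T" "\<And>a x. x \<in> T \<Longrightarrow> sn a x \<in> T"
  shows "hom_on T sn Ng se Eg h'"
  unfolding hom_on_def
proof (intro conjI ballI allI)
  show "h' (x + y) = h' x + h' y" if "x \<in> T" "y \<in> T" for x y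
    using that assms(2,3) hom_on_add[OF assms(1) that] by simp
  show "h' (sn a x) = se a (h' x)" if "x \<in> T" for a x
    using that assms(2,4) hom_on_sm[OF assms(1) that] by simp
  show "h' ` (T \<inter> Ng n) \<subseteq> Eg n" for n
    using assms(2) hom_on_deg[OF assms(1)] by auto
qed

lemma inj_general:
  fixes se :: "'a::comm_ring_1 \<Rightarrow> 'e::ab_group_add \<Rightarrow> 'e" and sn :: "'a \<Rightarrow> 'u::ab_group_add \<Rightarrow> 'u"
  assumes E: "gmod Ag se Eg" and inj: "gr_injective TYPE('a) Ag se Eg" and N: "gmod Ag sn Ng"
    and S: "graded_submodule sn Ng S" and f: "hom_on S sn Ng se Eg f"
  shows "\<exists>g. gr_hom sn Ng se Eg 0 g \<and> (\<forall>x\<in>S. g x = f x)"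
proof -
  interpret N: gmod Ag sn Ng by fact
  define good where "good G \<longleftrightarrow> functional G \<and> graded_submodule sn Ng (Domain G) \<and> S \<subseteq> Domain G \<and>
     hom_on (Domain G) sn Ng se Eg (gfun G) \<and> (\<forall>z\<in>S. gfun G z = f z)" for G :: "('u \<times> 'e) set"
  have gD1: "functional G" and gD2: "graded_submodule sn Ng (Domain G)" and gD3: "S \<subseteq> Domain G"
    and gD4: "hom_on (Domain G) sn Ng se Eg (gfun G)" and gD5: "\<forall>z\<in>S. gfun G z = f z"
    if "good G" for G using that unfolding good_def by simp_all
  have good_graph: "good (graph T h)" if "graded_submodule sn Ng T" "S \<subseteq> T" "hom_on T sn Ng se Eg h"
    "\<forall>z\<in>S. h z = f z" for T h
    unfolding good_def graph_Domain
  proof (intro conjI graph_functional that(1,2))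
    show "hom_on T sn Ng se Eg (gfun (graph T h))"
      by (rule hom_on_cong[OF that(3)]) (auto simp: graph_gfun N.gsub_add[OF that(1)] N.gsub_sm[OF that(1)])
    show "\<forall>z\<in>S. gfun (graph T h) z = f z" using that(2,4) by (auto simp: graph_gfun)
  qed
  have "\<exists>M\<in>{G. good G}. \<forall>X\<in>{G. good G}. M \<subseteq> X \<longrightarrow> X = M"
  proof (rule zorn_ne)
    show "graph S f \<in> {G. good G}" using good_graph[OF S order_refl f] by simp
  next
    fix C assume C: "C \<in> chains {G. good G}" "C \<noteq> {}"
    have Cg: "good G" if "G \<in> C" for G using C(1) that by (auto simp: chains_def)
    have Cc: "G \<subseteq> H \<or> H \<subseteq> G" if "G \<in> C" "H \<in> C" for G H
      using C(1) that by (auto simp: chains_def chain_subset_def)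
    have fnC: "functional (\<Union>C)" unfolding functional_def
    proof (intro allI impI)
      fix z w w' assume "(z, w) \<in> \<Union>C" "(z, w') \<in> \<Union>C"
      then obtain G H where GH: "G \<in> C" "H \<in> C" "(z, w) \<in> G" "(z, w') \<in> H" by blast
      from Cc[OF GH(1,2)] show "w = w'"
      proof
        assume "G \<subseteq> H" then show ?thesis using gD1[OF Cg[OF GH(2)]] GH unfolding functional_def by blast
      next
        assume "H \<subseteq> G" then show ?thesis using gD1[OF Cg[OF GH(1)]] GH unfolding functional_def by blast
      qed
    qed
    have dom: "Domain (\<Union>C) = \<Union>(Domain ` C)" by auto
    have gf: "gfun (\<Union>C) z = gfun G z" if "G \<in> C" "z \<in> Domain G" for G z
    proof (rule gfun_eq[OF fnC])
      have "(z, gfun G z) \<in> G" using gfun_in[OF gD1[OF Cg[OF that(1)]] that(2)] .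
      then show "(z, gfun G z) \<in> \<Union>C" using that(1) by blast
    qed
    have gsubD: "graded_submodule sn Ng (Domain (\<Union>C))" unfolding dom
    proof (rule N.gsub_chain)
      show "Domain ` C \<noteq> {}" using C(2) by blast
      show "graded_submodule sn Ng X" if "X \<in> Domain ` C" for X using that Cg gD2 by blast
      show "X \<subseteq> Y \<or> Y \<subseteq> X" if "X \<in> Domain ` C" "Y \<in> Domain ` C" for X Y
        using that Cc by (metis (no_types, lifting) Domain_mono imageE)
    qed
    obtain G0 where G0: "G0 \<in> C" using C(2) by blast
    have "S \<subseteq> Domain G0" using gD3[OF Cg[OF G0]] .
    then have SD: "S \<subseteq> Domain (\<Union>C)" using G0 by blast
    have two: "\<exists>G\<in>C. x \<in> Domain G \<and> y \<in> Domain G" if hxy: "x \<in> Domain (\<Union>C)" "y \<in> Domain (\<Union>C)" for x y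
    proof -
      obtain G H where GH: "G \<in> C" "H \<in> C" "x \<in> Domain G" "y \<in> Domain H" using hxy dom by auto
      from Cc[OF GH(1,2)] show ?thesis
      proof
        assume "G \<subseteq> H" then show ?thesis using GH by (meson Domain_mono subsetD)
      next
        assume "H \<subseteq> G" then show ?thesis using GH by (meson Domain_mono subsetD)
      qed
    qed
    have hom: "hom_on (Domain (\<Union>C)) sn Ng se Eg (gfun (\<Union>C))" unfolding hom_on_def
    proof (intro conjI ballI allI)
      fix x y assume xy: "x \<in> Domain (\<Union>C)" "y \<in> Domain (\<Union>C)"
      then obtain G where G: "G \<in> C" "x \<in> Domain G" "y \<in> Domain G" using two by blast
      have gG: "good G" by (rule Cg[OF G(1)])
      have "x + y \<in> Domain G" using N.gsub_add[OF gD2[OF gG] G(2,3)] .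
      then show "gfun (\<Union>C) (x + y) = gfun (\<Union>C) x + gfun (\<Union>C) y"
        using gf[OF G(1)] G(2,3) hom_on_add[OF gD4[OF gG] G(2,3)] by simp
    next
      fix a x assume x: "x \<in> Domain (\<Union>C)"
      then obtain G where G: "G \<in> C" "x \<in> Domain G" using dom by auto
      have gG: "good G" by (rule Cg[OF G(1)])
      have "sn a x \<in> Domain G" using N.gsub_sm[OF gD2[OF gG] G(2)] .
      then show "gfun (\<Union>C) (sn a x) = se a (gfun (\<Union>C) x)"
        using gf[OF G(1)] G(2) hom_on_sm[OF gD4[OF gG] G(2)] by simp
    next
      fix n show "gfun (\<Union>C) ` (Domain (\<Union>C) \<inter> Ng n) \<subseteq> Eg n"
      proof
        fix w assume "w \<in> gfun (\<Union>C) ` (Domain (\<Union>C) \<inter> Ng n)"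
        then obtain x where x: "x \<in> Domain (\<Union>C)" "x \<in> Ng n" "w = gfun (\<Union>C) x" by blast
        then obtain G where G: "G \<in> C" "x \<in> Domain G" using dom by auto
        have gG: "good G" by (rule Cg[OF G(1)])
        have "gfun G x \<in> Eg n" using hom_on_deg[OF gD4[OF gG] G(2) x(2)] .
        then show "w \<in> Eg n" using x(3) gf[OF G] by simp
      qed
    qed
    have onS: "\<forall>z\<in>S. gfun (\<Union>C) z = f z"
    proof
      fix z assume "z \<in> S"
      then have "z \<in> Domain G0" using \<open>S \<subseteq> Domain G0\<close> by blast
      then show "gfun (\<Union>C) z = f z" using gf[OF G0] gD5[OF Cg[OF G0]] \<open>z \<in> S\<close> by simp
    qed
    show "\<Union>C \<in> {G. good G}" using fnC gsubD SD hom onS unfolding good_def by (intro CollectI conjI)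
  qed
  then obtain G where G: "good G" and max: "\<And>X. good X \<Longrightarrow> G \<subseteq> X \<Longrightarrow> X = G" by blast
  have gG: "functional G" "graded_submodule sn Ng (Domain G)" "S \<subseteq> Domain G"
     "hom_on (Domain G) sn Ng se Eg (gfun G)" "\<forall>z\<in>S. gfun G z = f z"
    using gD1[OF G] gD2[OF G] gD3[OF G] gD4[OF G] gD5[OF G] by auto
  have full: "Domain G = UNIV"
  proof (rule ccontr)
    assume "Domain G \<noteq> UNIV"
    then obtain x s where x: "x \<in> Ng s" "x \<notin> Domain G" using N.gsub_ex_hom_notin[OF gG(2)] by blast
    obtain T' h' where T': "graded_submodule sn Ng T'" "Domain G \<subseteq> T'" "x \<in> T'"
      "hom_on T' sn Ng se Eg h'" "\<forall>z\<in>Domain G. h' z = gfun G z"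
      using ext_step[OF E inj N gG(2) gG(4) x] by blast
    have "good (graph T' h')"
    proof (rule good_graph)
      show "\<forall>z\<in>S. h' z = f z"
      proof
        fix z assume "z \<in> S"
        then have "z \<in> Domain G" using gG(3) by blast
        then show "h' z = f z" using T'(5) gG(5) \<open>z \<in> S\<close> by simp
      qed
    qed (use T' gG(3) in auto)
    moreover have "G \<subseteq> graph T' h'"
    proof
      fix p assume "p \<in> G"
      then obtain z w where p: "p = (z, w)" "(z, w) \<in> G" by (cases p) auto
      then have "z \<in> Domain G" by blast
      moreover have "w = gfun G z" using gfun_eq[OF gG(1) p(2)] by simp
      ultimately show "p \<in> graph T' h'" using p(1) T'(2,5) unfolding graph_def by auto
    qed
    ultimately have "graph T' h' = G" by (rule max)
    then have "Domain G = T'" using graph_Domain by metis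
    then show False using x(2) T'(3) by simp
  qed
  have "gr_hom sn Ng se Eg 0 (gfun G)" using gG(4) full by (simp add: hom_on_UNIV)
  then show ?thesis using gG(5) by blast
qed

lemma uniform:
  fixes se :: "'a::comm_ring_1 \<Rightarrow> 'e::ab_group_add \<Rightarrow> 'e"
  assumes E: "gmod Ag se Eg" and inj: "gr_injective TYPE('a) Ag se Eg" and ind: "indecomposable se Eg"
    and x1: "x1 \<in> Eg s1" "x1 \<noteq> 0" and u: "u \<in> Eg n" "u \<noteq> 0"
  shows "\<exists>a b. se a u = se b x1 \<and> se a u \<noteq> 0"
proof -
  interpret E: gmod Ag se Eg by fact
  interpret EE: gmod2 Ag se Eg se Eg by unfold_locales
  define K where "K = {se a x1 | a. True}"
  have K: "graded_submodule se Eg K" unfolding K_def by (rule E.gsub_cyclic[OF x1(1)])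
  have x1K: "x1 \<in> K" unfolding K_def by (metis (mono_tags, lifting) E.sm_one mem_Collect_eq)
  define ess where "ess N \<longleftrightarrow> (\<forall>u\<in>N. \<forall>n. u \<in> Eg n \<longrightarrow> u \<noteq> 0 \<longrightarrow> (\<exists>a. se a u \<in> K \<and> se a u \<noteq> 0))" for N
  define A1 where "A1 = {N. graded_submodule se Eg N \<and> K \<subseteq> N \<and> ess N}"
  have "\<exists>M\<in>A1. \<forall>X\<in>A1. M \<subseteq> X \<longrightarrow> X = M"
  proof (rule zorn_ne)
    have "ess K" unfolding ess_def by (metis E.sm_one)
    then show "K \<in> A1" using K unfolding A1_def by (intro CollectI conjI order_refl)
  next
    fix C assume C: "C \<in> chains A1" "C \<noteq> {}"
    have CA: "X \<in> A1" if "X \<in> C" for X using C(1) that by (auto simp: chains_def)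
    have "graded_submodule se Eg (\<Union>C)"
    proof (rule E.gsub_chain[OF C(2)])
      show "graded_submodule se Eg S" if "S \<in> C" for S using CA[OF that] unfolding A1_def by blast
      show "S \<subseteq> T \<or> T \<subseteq> S" if "S \<in> C" "T \<in> C" for S T
        using C(1) that by (auto simp: chains_def chain_subset_def)
    qed
    moreover have "K \<subseteq> \<Union>C"
    proof -
      obtain X where X: "X \<in> C" using C(2) by blast
      then have "K \<subseteq> X" using CA[OF X] unfolding A1_def by simp
      then show ?thesis using X by blast
    qed
    moreover have "ess (\<Union>C)" unfolding ess_def
    proof (intro ballI allI impI)
      fix v k assume v: "v \<in> \<Union>C" "v \<in> Eg k" "v \<noteq> 0"
      then obtain X where X: "X \<in> C" "v \<in> X" by blast
      have "ess X" using CA[OF X(1)] unfolding A1_def by simp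
      then show "\<exists>a. se a v \<in> K \<and> se a v \<noteq> 0" using X(2) v(2,3) unfolding ess_def by blast
    qed
    ultimately show "\<Union>C \<in> A1" unfolding A1_def by (intro CollectI conjI)
  qed
  then obtain M where M1: "M \<in> A1" and M2: "\<forall>X\<in>A1. M \<subseteq> X \<longrightarrow> X = M" by blast
  have M: "graded_submodule se Eg M" "K \<subseteq> M" "ess M" using M1 unfolding A1_def by simp_all
  have Mmax: "X = M" if "graded_submodule se Eg X" "K \<subseteq> X" "ess X" "M \<subseteq> X" for X
  proof -
    have "X \<in> A1" using that(1-3) unfolding A1_def by (intro CollectI conjI)
    then show ?thesis using M2 that(4) by blast
  qed
  define A2 where "A2 = {C. graded_submodule se Eg C \<and> C \<inter> M = {0}}"
  have "\<exists>C\<in>A2. \<forall>X\<in>A2. C \<subseteq> X \<longrightarrow> X = C"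
  proof (rule zorn_ne)
    have "{0} \<inter> M = {0}" using E.gsub_0[OF M(1)] by auto
    then show "{0} \<in> A2" using E.gsub_zero unfolding A2_def by (intro CollectI conjI)
  next
    fix C assume C: "C \<in> chains A2" "C \<noteq> {}"
    have CA: "X \<in> A2" if "X \<in> C" for X using C(1) that by (auto simp: chains_def)
    have "graded_submodule se Eg (\<Union>C)"
    proof (rule E.gsub_chain[OF C(2)])
      show "graded_submodule se Eg S" if "S \<in> C" for S using CA[OF that] unfolding A2_def by blast
      show "S \<subseteq> T \<or> T \<subseteq> S" if "S \<in> C" "T \<in> C" for S T
        using C(1) that by (auto simp: chains_def chain_subset_def)
    qed
    moreover have "\<Union>C \<inter> M = {0}"
    proof
      show "\<Union>C \<inter> M \<subseteq> {0}"
      proof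
        fix x assume "x \<in> \<Union>C \<inter> M"
        then obtain X where "X \<in> C" "x \<in> X" "x \<in> M" by blast
        moreover have "X \<inter> M = {0}" using CA[OF \<open>X \<in> C\<close>] unfolding A2_def by simp
        ultimately show "x \<in> {0}" by blast
      qed
      obtain X where X: "X \<in> C" using C(2) by blast
      have "0 \<in> X" using CA[OF X] E.gsub_0 unfolding A2_def by simp
      then show "{0} \<subseteq> \<Union>C \<inter> M" using X E.gsub_0[OF M(1)] by blast
    qed
    ultimately show "\<Union>C \<in> A2" unfolding A2_def by (intro CollectI conjI)
  qed
  then obtain C where C1: "C \<in> A2" and C2: "\<forall>X\<in>A2. C \<subseteq> X \<longrightarrow> X = C" by blast
  have C: "graded_submodule se Eg C" "C \<inter> M = {0}" using C1 unfolding A2_def by simp_all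
  have Cmax: "X = C" if "graded_submodule se Eg X" "X \<inter> M = {0}" "C \<subseteq> X" for X
  proof -
    have "X \<in> A2" using that(1-2) unfolding A2_def by (intro CollectI conjI)
    then show ?thesis using C2 that(3) by blast
  qed
  have MC0: "m = 0" if "m \<in> M" "m \<in> C" for m using C(2) that by blast
  define D where "D = {m + c | m c. m \<in> M \<and> c \<in> C}"
  have D: "graded_submodule se Eg D" unfolding D_def by (rule E.gsub_plus[OF M(1) C(1)])
  have uniq: "m = m'" if "m \<in> M" "m' \<in> M" "c \<in> C" "c' \<in> C" "m + c = m' + c'" for m m' c c'
  proof -
    have "m - m' = c' - c" using that(5) by (simp add: algebra_simps)
    moreover have "m - m' \<in> M" by (rule E.gsub_diff[OF M(1) that(1,2)])
    moreover have "c' - c \<in> C" by (rule E.gsub_diff[OF C(1) that(4,3)])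
    ultimately show ?thesis using MC0 by force
  qed
  define \<pi> where "\<pi> z = (SOME m. \<exists>c. m \<in> M \<and> c \<in> C \<and> z = m + c)" for z
  have \<pi>eq: "\<pi> (m + c) = m" if "m \<in> M" "c \<in> C" for m c
  proof -
    have "\<exists>c'. \<pi> (m + c) \<in> M \<and> c' \<in> C \<and> m + c = \<pi> (m + c) + c'"
      unfolding \<pi>_def by (rule someI[of _ m]) (use that in blast)
    then obtain c' where "\<pi> (m + c) \<in> M" "c' \<in> C" "m + c = \<pi> (m + c) + c'" by blast
    then show ?thesis using uniq[OF that(1) _ that(2)] by metis
  qed
  have memD: "z \<in> D \<longleftrightarrow> (\<exists>m c. m \<in> M \<and> c \<in> C \<and> z = m + c)" for z unfolding D_def by blast
  have hD: "hom_on D se Eg se Eg \<pi>" unfolding hom_on_def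
  proof (intro conjI ballI allI)
    show "\<pi> (x + y) = \<pi> x + \<pi> y" if hxy: "x \<in> D" "y \<in> D" for x y
    proof -
      obtain m c m' c' where mc: "m \<in> M" "c \<in> C" "x = m + c" "m' \<in> M" "c' \<in> C" "y = m' + c'"
        using hxy memD by meson
      have "x + y = (m + m') + (c + c')" using mc by (simp add: algebra_simps)
      then have "\<pi> (x + y) = m + m'" using \<pi>eq[OF E.gsub_add[OF M(1) mc(1,4)] E.gsub_add[OF C(1) mc(2,5)]] by simp
      moreover have "\<pi> x = m" "\<pi> y = m'" using mc \<pi>eq by simp_all
      ultimately show ?thesis by simp
    qed
    show "\<pi> (se a x) = se a (\<pi> x)" if hx: "x \<in> D" for a x
    proof -
      obtain m c where mc: "m \<in> M" "c \<in> C" "x = m + c" using hx memD by meson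
      have "se a x = se a m + se a c" using mc by (simp add: E.sm_add_right)
      then have "\<pi> (se a x) = se a m" using \<pi>eq[OF E.gsub_sm[OF M(1) mc(1)] E.gsub_sm[OF C(1) mc(2)]] by simp
      moreover have "\<pi> x = m" using mc \<pi>eq by simp
      ultimately show ?thesis by simp
    qed
    show "\<pi> ` (D \<inter> Eg n) \<subseteq> Eg n" for n
    proof
      fix w assume "w \<in> \<pi> ` (D \<inter> Eg n)"
      then obtain z where z: "z \<in> D" "z \<in> Eg n" "w = \<pi> z" by blast
      obtain m c where mc: "m \<in> M" "c \<in> C" "z = m + c" using z(1) memD by meson
      have "comp Eg m i = 0" if "i \<noteq> n" for i
      proof -
        have "comp Eg m i + comp Eg c i = 0" using z(2) mc(3) that by (simp add: E.in_G_iff E.comp_add)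
        then have "comp Eg m i = - comp Eg c i" by (simp add: eq_neg_iff_add_eq_0)
        moreover have "- comp Eg c i \<in> C" by (rule E.gsub_uminus[OF C(1) E.gsub_comp[OF C(1) mc(2)]])
        moreover have "comp Eg m i \<in> M" by (rule E.gsub_comp[OF M(1) mc(1)])
        ultimately show ?thesis using MC0 by metis
      qed
      then have "m \<in> Eg n" by (simp add: E.in_G_iff)
      then show "w \<in> Eg n" using z(3) mc \<pi>eq by simp
    qed
  qed
  obtain \<psi> where \<psi>: "gr_hom se Eg se Eg 0 \<psi>" and \<psi>D: "\<forall>x\<in>D. \<psi> x = \<pi> x"
    using inj_general[OF E inj E D hD] by blast
  have \<psi>M: "\<psi> m = m" if "m \<in> M" for m
  proof -
    have "m + 0 \<in> D" using that E.gsub_0[OF C(1)] memD by blast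
    then show ?thesis using \<psi>D \<pi>eq[OF that E.gsub_0[OF C(1)]] by simp
  qed
  have \<psi>C: "\<psi> c = 0" if "c \<in> C" for c
  proof -
    have "0 + c \<in> D" using that E.gsub_0[OF M(1)] memD by blast
    then show ?thesis using \<psi>D \<pi>eq[OF E.gsub_0[OF M(1)] that] by simp
  qed
  have ker: "{x. \<psi> x = 0} = C"
  proof (rule Cmax)
    show "graded_submodule se Eg {x. \<psi> x = 0}" by (rule EE.gsub_ker[OF \<psi>])
    show "{x. \<psi> x = 0} \<inter> M = {0}" using \<psi>M gr_hom_0[OF \<psi>] E.gsub_0[OF M(1)] by auto
    show "C \<subseteq> {x. \<psi> x = 0}" using \<psi>C by blast
  qed
  have rng: "range \<psi> = M"
  proof (rule Mmax)
    show "graded_submodule se Eg (range \<psi>)" by (rule EE.gsub_range[OF \<psi>])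
    show "M \<subseteq> range \<psi>" using \<psi>M by (metis rangeI subsetI)
    then show "K \<subseteq> range \<psi>" using M(2) by blast
    show "ess (range \<psi>)" unfolding ess_def
    proof (intro ballI allI impI)
      fix v k assume v: "v \<in> range \<psi>" "v \<in> Eg k" "v \<noteq> 0"
      then obtain e where e: "v = \<psi> e" by blast
      define e' where "e' = comp Eg e k"
      have e'k: "e' \<in> Eg k" unfolding e'_def by simp
      have "\<psi> e' = comp Eg (\<psi> e) (k + 0)" unfolding e'_def by (rule EE.gr_hom_comp[OF \<psi>, symmetric])
      also have "\<dots> = v" using v(2) e by (simp add: E.comp_hom)
      finally have \<psi>e': "\<psi> e' = v" .
      have "e' \<notin> C" using \<psi>e' \<psi>C v(3) by blast
      define C' where "C' = {c + w | c w. c \<in> C \<and> w \<in> {se a e' | a. True}}"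
      have C': "graded_submodule se Eg C'" unfolding C'_def
        by (rule E.gsub_plus[OF C(1) E.gsub_cyclic[OF e'k]])
      have "C \<subseteq> C'"
      proof
        fix c assume "c \<in> C"
        moreover have "se 0 e' = 0" by simp
        ultimately show "c \<in> C'" unfolding C'_def by (metis (mono_tags, lifting) add.right_neutral mem_Collect_eq)
      qed
      moreover have "e' \<in> C'" unfolding C'_def using E.gsub_0[OF C(1)]
        by (metis (mono_tags, lifting) E.sm_one add.left_neutral mem_Collect_eq)
      ultimately have "C' \<inter> M \<noteq> {0}" using Cmax[OF C'] \<open>e' \<notin> C\<close> by blast
      moreover have "0 \<in> C' \<inter> M" using E.gsub_0[OF C'] E.gsub_0[OF M(1)] by blast
      ultimately obtain z where z: "z \<in> C'" "z \<in> M" "z \<noteq> 0" by blast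
      obtain c a where ca: "c \<in> C" "z = c + se a e'" using z(1) unfolding C'_def by blast
      have "\<psi> z = se a v" using ca \<psi>C \<psi>e' gr_hom_add[OF \<psi>] gr_hom_sm[OF \<psi>] by simp
      then have zz: "z = se a v" using \<psi>M[OF z(2)] by simp
      obtain t where t: "comp Eg z t \<noteq> 0" using E.ex_comp_nonzero[OF z(3)] by blast
      have ct: "comp Eg z t = se (comp (Agz Ag) a (t - k)) v" using zz E.sm_comp[OF v(2)] by simp
      have "comp Eg z t \<in> M" by (rule E.gsub_comp[OF M(1) z(2)])
      then obtain b where b: "se b (comp Eg z t) \<in> K" "se b (comp Eg z t) \<noteq> 0"
        using M(3) t E.comp_in unfolding ess_def by blast
      have "se b (comp Eg z t) = se (b * comp (Agz Ag) a (t - k)) v" using ct by (simp add: E.sm_mult)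
      then show "\<exists>a. se a v \<in> K \<and> se a v \<noteq> 0" using b by metis
    qed
  qed
  have dec: "\<forall>x. \<exists>s\<in>M. \<exists>t\<in>C. x = s + t"
  proof
    fix x
    have "\<psi> x \<in> M" using rng by blast
    moreover have "\<psi> (x - \<psi> x) = 0" using \<psi>M[OF \<open>\<psi> x \<in> M\<close>] gr_hom_diff[OF \<psi>] by simp
    then have "x - \<psi> x \<in> C" using ker by blast
    ultimately show "\<exists>s\<in>M. \<exists>t\<in>C. x = s + t" by (metis add.commute diff_add_cancel)
  qed
  have "M = {0} \<or> C = {0}" using ind M(1) C(1,2) dec unfolding indecomposable_def
    by (metis Int_commute)
  moreover have "M \<noteq> {0}" using x1K M(2) x1(2) by blast
  ultimately have C0: "C = {0}" by blast
  have "u \<in> M" using dec C0 by (metis add.right_neutral singletonD)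
  then obtain a where "se a u \<in> K" "se a u \<noteq> 0" using M(3) u unfolding ess_def by blast
  then show ?thesis unfolding K_def by blast
qed

lemma cyc_ext:
  fixes sx :: "'a::comm_ring_1 \<Rightarrow> 'x::ab_group_add \<Rightarrow> 'x" and sm :: "'a \<Rightarrow> 'm::ab_group_add \<Rightarrow> 'm"
  assumes X: "gmod Ag sx Xg" and inj: "gr_injective TYPE('a) Ag sx Xg" and M: "gmod Ag sm Mg"
    and m: "m \<in> Mg n" and z: "z \<in> Xg w" and ann: "\<And>c. sm c m = 0 \<Longrightarrow> sx c z = 0"
  shows "\<exists>g. gr_hom sm Mg sx Xg (w - n) g \<and> g m = z"
proof -
  interpret X: gmod Ag sx Xg by fact
  interpret M: gmod Ag sm Mg by fact
  define d where "d = w - n"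
  define Mg' where "Mg' k = Mg (k - d)" for k
  interpret M': gmod Ag sm Mg' unfolding Mg'_def by (rule M.gmod_shift)
  have m': "m \<in> Mg' w" using m by (simp add: Mg'_def d_def)
  define S where "S = {sm a m | a. True}"
  have S: "graded_submodule sm Mg' S" unfolding S_def by (rule M'.gsub_cyclic[OF m'])
  define f where "f y = sx (SOME a. y = sm a m) z" for y
  have feq: "f (sm a m) = sx a z" for a
  proof -
    have "sm a m = sm (SOME a'. sm a m = sm a' m) m" by (rule someI[of _ a]) simp
    then have "sm (a - (SOME a'. sm a m = sm a' m)) m = 0" by (simp add: M.sm_diff_left)
    then have "sx (a - (SOME a'. sm a m = sm a' m)) z = 0" by (rule ann)
    then show ?thesis unfolding f_def by (simp add: X.sm_diff_left)
  qed
  have memS: "y \<in> S \<longleftrightarrow> (\<exists>a. y = sm a m)" for y unfolding S_def by blast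
  have hom: "hom_on S sm Mg' sx Xg f" unfolding hom_on_def
  proof (intro conjI ballI allI)
    show "f (y1 + y2) = f y1 + f y2" if hy: "y1 \<in> S" "y2 \<in> S" for y1 y2
    proof -
      obtain a1 a2 where "y1 = sm a1 m" "y2 = sm a2 m" using hy memS by meson
      then show ?thesis using feq[of "a1 + a2"] feq[of a1] feq[of a2] by (simp add: M.sm_add_left X.sm_add_left)
    qed
    show "f (sm b y) = sx b (f y)" if hy: "y \<in> S" for b y
    proof -
      obtain a where "y = sm a m" using hy memS by meson
      then show ?thesis using feq[of "b * a"] feq[of a] by (simp add: M.sm_mult X.sm_mult)
    qed
    show "f ` (S \<inter> Mg' k) \<subseteq> Xg k" for k
    proof
      fix v assume "v \<in> f ` (S \<inter> Mg' k)"
      then obtain y where y: "y \<in> S" "y \<in> Mg' k" "v = f y" by blast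
      obtain a where a: "y = sm a m" using y(1) memS by meson
      have "y = comp Mg' y k" using y(2) by (simp add: M'.comp_hom)
      also have "\<dots> = sm (comp (Agz Ag) a (k - w)) m" using a M'.sm_comp[OF m'] by simp
      finally have "v = sx (comp (Agz Ag) a (k - w)) z" using y(3) feq by simp
      moreover have "sx (comp (Agz Ag) a (k - w)) z \<in> Xg (k - w + w)" by (rule X.sm_deg[OF X.A.comp_in z])
      ultimately show "v \<in> Xg k" by simp
    qed
  qed
  obtain g where g: "gr_hom sm Mg' sx Xg 0 g" "\<forall>y\<in>S. g y = f y"
    using inj_general[OF X inj M'.gmod_axioms S hom] by blast
  have "gr_hom sm Mg sx Xg d g" using g(1) gr_hom_shift unfolding Mg'_def by metis
  moreover have "g m = z"
  proof -
    have "m \<in> S" using memS by (metis M.sm_one)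
    then show ?thesis using g(2) feq[of 1] by simp
  qed
  ultimately show ?thesis unfolding d_def by blast
qed

locale Einj = E: gmod Ag se Eg for Ag :: "nat \<Rightarrow> 'a::comm_ring_1 set" and se :: "'a \<Rightarrow> 'e::ab_group_add \<Rightarrow> 'e" and Eg +
  assumes inj: "gr_injective TYPE('a) Ag se Eg" and ind: "indecomposable se Eg"
begin

lemma common:
  assumes x1: "x1 \<in> Eg s1" "x1 \<noteq> 0" and x2: "x2 \<in> Eg s2" "x2 \<noteq> 0"
  shows "\<exists>z t. z \<in> Eg t \<and> z \<noteq> 0 \<and> (\<forall>c. se c x1 = 0 \<longrightarrow> se c z = 0) \<and> (\<forall>c. se c x2 = 0 \<longrightarrow> se c z = 0)"
proof -
  obtain a b where ab: "se a x2 = se b x1" "se a x2 \<noteq> 0"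
    using uniform[OF E.gmod_axioms inj ind x1 x2] by blast
  obtain t where t: "comp Eg (se a x2) t \<noteq> 0" using E.ex_comp_nonzero[OF ab(2)] by blast
  define z where "z = comp Eg (se a x2) t"
  have z2: "z = se (comp (Agz Ag) a (t - s2)) x2" unfolding z_def by (rule E.sm_comp[OF x2(1)])
  have z1: "z = se (comp (Agz Ag) b (t - s1)) x1" unfolding z_def ab(1) by (rule E.sm_comp[OF x1(1)])
  have "z \<in> Eg t" unfolding z_def by simp
  moreover have "se c z = 0" if "se c x1 = 0" for c using that z1 E.sm_comm[of c] by simp
  moreover have "se c z = 0" if "se c x2 = 0" for c using that z2 E.sm_comm[of c] by simp
  ultimately show ?thesis using t z_def by blast
qed

lemma ex_hom_nonzero: "\<exists>x t. x \<in> Eg t \<and> x \<noteq> 0"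
proof -
  obtain x :: 'e where "x \<noteq> 0" using ind unfolding indecomposable_def by blast
  then obtain t where "comp Eg x t \<noteq> 0" using E.ex_comp_nonzero by blast
  then show ?thesis using E.comp_in by blast
qed

lemma PE_fin:
  assumes "finite F" "\<forall>x\<in>F. x \<noteq> 0 \<and> homogeneous Eg x \<and> se (c x) x = 0"
  shows "\<exists>z t. z \<in> Eg t \<and> z \<noteq> 0 \<and> se (\<Sum>x\<in>F. c x) z = 0"
  using assms
proof (induction F rule: finite_induct)
  case empty then show ?case using ex_hom_nonzero by simp
next
  case (insert x F)
  then obtain z t where z: "z \<in> Eg t" "z \<noteq> 0" "se (\<Sum>x\<in>F. c x) z = 0" by auto
  obtain s where x: "x \<in> Eg s" "x \<noteq> 0" "se (c x) x = 0"
    using insert(4) unfolding homogeneous_def by auto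
  obtain z' t' where z': "z' \<in> Eg t'" "z' \<noteq> 0" "\<forall>c. se c x = 0 \<longrightarrow> se c z' = 0" "\<forall>c. se c z = 0 \<longrightarrow> se c z' = 0"
    using common[OF x(1,2) z(1,2)] by blast
  have "se (\<Sum>x\<in>insert x F. c x) z' = se (c x) z' + se (\<Sum>x\<in>F. c x) z'"
    using insert(1,2) by (simp add: E.sm_add_left)
  also have "\<dots> = 0" using z'(3,4) x(3) z(3) by simp
  finally show ?case using z'(1,2) by blast
qed

lemma PE_char: "a \<in> PE se Eg \<longleftrightarrow> (\<exists>x t. x \<in> Eg t \<and> x \<noteq> 0 \<and> se a x = 0)"
proof
  assume "a \<in> PE se Eg"
  then have "\<exists>F c. finite F \<and> (\<forall>x\<in>F. x \<noteq> 0 \<and> homogeneous Eg x \<and> se (c x) x = 0) \<and>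
                         a = (\<Sum>x\<in>F. c x)" unfolding PE_def by (rule CollectD)
  then obtain F where "\<exists>c. finite F \<and> (\<forall>x\<in>F. x \<noteq> 0 \<and> homogeneous Eg x \<and> se (c x) x = 0) \<and>
                         a = (\<Sum>x\<in>F. c x)" by (rule exE)
  then obtain c where F: "finite F \<and> (\<forall>x\<in>F. x \<noteq> 0 \<and> homogeneous Eg x \<and> se (c x) x = 0) \<and>
                         a = (\<Sum>x\<in>F. c x)" by (rule exE)
  from PE_fin[OF F[THEN conjunct1] F[THEN conjunct2, THEN conjunct1]] F[THEN conjunct2, THEN conjunct2]
  show "\<exists>x t. x \<in> Eg t \<and> x \<noteq> 0 \<and> se a x = 0" by simp
next
  assume "\<exists>x t. x \<in> Eg t \<and> x \<noteq> 0 \<and> se a x = 0"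
  then obtain x t where x: "x \<in> Eg t" "x \<noteq> 0" "se a x = 0" by blast
  have "finite {x} \<and> (\<forall>y\<in>{x}. y \<noteq> 0 \<and> homogeneous Eg y \<and> se ((\<lambda>_. a) y) y = 0) \<and> a = (\<Sum>y\<in>{x}. (\<lambda>_. a) y)"
    using x unfolding homogeneous_def by auto
  then show "a \<in> PE se Eg" unfolding PE_def by (intro CollectI exI)
qed

lemma one_notin_PE: "1 \<notin> PE se Eg"
  using PE_char by simp

lemma PE_list:
  fixes b :: "nat \<Rightarrow> 'a"
  assumes "\<forall>j<r. b j \<in> PE se Eg"
  shows "\<exists>z t. z \<in> Eg t \<and> z \<noteq> 0 \<and> (\<forall>j<r. se (b j) z = 0)"
  using assms
proof (induction r)
  case 0 then show ?case using ex_hom_nonzero by simp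
next
  case (Suc r)
  then obtain z t where z: "z \<in> Eg t" "z \<noteq> 0" "\<forall>j<r. se (b j) z = 0" by auto
  obtain x s where x: "x \<in> Eg s" "x \<noteq> 0" "se (b r) x = 0" using Suc(2) PE_char by blast
  obtain z' t' where z': "z' \<in> Eg t'" "z' \<noteq> 0" "\<forall>c. se c x = 0 \<longrightarrow> se c z' = 0" "\<forall>c. se c z = 0 \<longrightarrow> se c z' = 0"
    using common[OF x(1,2) z(1,2)] by blast
  have "\<forall>j<Suc r. se (b j) z' = 0" using z(3) z'(3,4) x(3) less_Suc_eq by auto
  then show ?case using z' by blast
qed

end

context
  fixes Ag :: "nat \<Rightarrow> 'a::comm_ring_1 set"
  assumes ring: "graded_ring Ag"
begin

interpretation R: gmod Ag "(*)" "Agz Ag"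
  using gmod_ring_shift[OF ring, of 0] by simp

lemma Agz_0: "0 \<in> Agz Ag n" by simp
lemma Agz_add: "a \<in> Agz Ag n \<Longrightarrow> b \<in> Agz Ag n \<Longrightarrow> a + b \<in> Agz Ag n"
  using add_subgroup_add[OF R.sub] .
lemma Agz_diff: "a \<in> Agz Ag n \<Longrightarrow> b \<in> Agz Ag n \<Longrightarrow> a - b \<in> Agz Ag n"
  using add_subgroup_diff[OF R.sub] .
lemma Agz_sum: "(\<And>i. i \<in> I \<Longrightarrow> f i \<in> Agz Ag n) \<Longrightarrow> sum f I \<in> Agz Ag n"
  using add_subgroup_sum[OF R.sub] .
lemma Agz_mult': "a \<in> Agz Ag i \<Longrightarrow> b \<in> Agz Ag j \<Longrightarrow> k = i + j \<Longrightarrow> a * b \<in> Agz Ag k"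
  using Agz_mult[OF ring] by blast
lemma Agz_comp: "comp (Agz Ag) a n \<in> Agz Ag n" by simp
lemma ring_comp: "v \<in> Agz Ag e \<Longrightarrow> comp (Agz Ag) (a * v) t = comp (Agz Ag) a (t - e) * v"
  using R.sm_comp by blast
lemma Agz_homogeneous: "v \<in> Agz Ag e \<Longrightarrow> homogeneous Ag v"
proof (cases "0 \<le> e")
  case True then show "v \<in> Agz Ag e \<Longrightarrow> homogeneous Ag v" unfolding homogeneous_def Agz_def by auto
next
  case False
  moreover have "0 \<in> Ag 0" using ring unfolding graded_ring_def add_subgroup_def by blast
  ultimately show "v \<in> Agz Ag e \<Longrightarrow> homogeneous Ag v" unfolding homogeneous_def Agz_def by auto
qed

lemma homogenize:
  assumes "x \<in> Agz Ag d" "x = (\<Sum>p<q. c p * v p)" "\<And>p. p < q \<Longrightarrow> v p \<in> Agz Ag (e p)"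
  shows "x = (\<Sum>p<q. comp (Agz Ag) (c p) (d - e p) * v p)"
proof -
  have "x = comp (Agz Ag) x d" using assms(1) by (simp add: R.comp_hom)
  also have "\<dots> = (\<Sum>p<q. comp (Agz Ag) (c p * v p) d)" using assms(2) by (simp add: R.comp_sum)
  also have "\<dots> = (\<Sum>p<q. comp (Agz Ag) (c p) (d - e p) * v p)"
    by (rule sum.cong) (simp_all add: ring_comp assms(3))
  finally show ?thesis .
qed

end

lemma sum_lessThan_add_nat: fixes f :: "nat \<Rightarrow> 'b::comm_monoid_add" and L :: nat
  shows "(\<Sum>s<q + L. f s) = (\<Sum>s<q. f s) + (\<Sum>s<L. f (q + s))"
  by (induction L) (simp_all add: add.assoc)

definition syz_gen :: "(nat \<Rightarrow> 'a::comm_ring_1 set) \<Rightarrow> nat \<Rightarrow> nat \<Rightarrow> (nat \<Rightarrow> nat \<Rightarrow> 'a) \<Rightarrow> (nat \<Rightarrow> int) \<Rightarrow> bool" where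
  "syz_gen Ag k q w \<epsilon> \<longleftrightarrow> (\<exists>(l::nat) (\<sigma>::nat \<Rightarrow> nat \<Rightarrow> 'a) (\<eta>::nat \<Rightarrow> int). (\<forall>s<l. \<forall>p<q. \<sigma> s p \<in> Agz Ag (\<eta> s - \<epsilon> p)) \<and>
     (\<forall>s<l. \<forall>i<k. (\<Sum>p<q. \<sigma> s p * w p i) = 0) \<and>
     (\<forall>t. (\<forall>i<k. (\<Sum>p<q. t p * w p i) = 0) \<longrightarrow> (\<exists>\<mu>. \<forall>p<q. t p = (\<Sum>s<l. \<mu> s * \<sigma> s p))))"


lemma delta_sum1: fixes v :: "nat \<Rightarrow> 'a::comm_ring_1"
  shows "p < q \<Longrightarrow> (\<Sum>p'<q. (if p' = p then 1 else 0) * v p') = v p"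
proof -
  assume "p < q"
  have "(\<Sum>p'<q. (if p' = p then 1 else 0) * v p') = (\<Sum>p'<q. if p' = p then v p' else 0)"
    by (rule sum.cong) auto
  then show ?thesis using \<open>p < q\<close> by simp
qed

lemma delta_sum2: fixes v :: "nat \<Rightarrow> 'a::comm_ring_1"
  shows "p < q \<Longrightarrow> (\<Sum>p'<q. (if p = p' then 1 else 0) * v p') = v p"
  using delta_sum1[of p q v] by (simp add: eq_commute[of p])

lemma delta_sum3: fixes v :: "nat \<Rightarrow> 'a::comm_ring_1"
  shows "p < q \<Longrightarrow> (\<Sum>p'<q. v p' * (if p' = p then 1 else 0)) = v p"
  using delta_sum1[of p q v] by (simp add: mult.commute)

lemma syz1:
  fixes v :: "nat \<Rightarrow> 'a::comm_ring_1"
  assumes ring: "graded_ring Ag" and coh: "coherent Ag" and v: "\<And>p. p < q \<Longrightarrow> v p \<in> Agz Ag (\<epsilon> p)"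
  shows "\<exists>(l::nat) (\<sigma>::nat \<Rightarrow> nat \<Rightarrow> 'a) (\<eta>::nat \<Rightarrow> int). (\<forall>s<l. \<forall>p<q. \<sigma> s p \<in> Agz Ag (\<eta> s - \<epsilon> p)) \<and>
     (\<forall>s<l. (\<Sum>p<q. \<sigma> s p * v p) = 0) \<and>
     (\<forall>t. (\<Sum>p<q. t p * v p) = 0 \<longrightarrow> (\<exists>\<mu>. \<forall>p<q. t p = (\<Sum>s<l. \<mu> s * \<sigma> s p)))"
proof -
  define J where "J = {\<Sum>p<q. a p * v p | a. True}"
  have "fg_graded_ideal Ag J" unfolding fg_graded_ideal_def J_def
    by (rule exI[of _ q], rule exI[of _ v]) (use v Agz_homogeneous[OF ring] in blast)
  then have "fin_pres Ag (*) (Agz Ag) J" using coh unfolding coherent_def by blast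
  then obtain k :: nat and g :: "nat \<Rightarrow> 'a" and d :: "nat \<Rightarrow> int" where
    g: "\<forall>i<k. g i \<in> J \<inter> Agz Ag (d i)" and J: "J = {\<Sum>i<k. a i * g i | a. True}" and
    rel: "\<exists>(l::nat) (r::nat \<Rightarrow> nat \<Rightarrow> 'a) (e::nat \<Rightarrow> int).
           (\<forall>j<l. (\<forall>i<k. r j i \<in> Agz Ag (e j - d i)) \<and> (\<Sum>i<k. r j i * g i) = 0) \<and>
           (\<forall>a. (\<Sum>i<k. a i * g i) = 0 \<longrightarrow> (\<exists>b. \<forall>i<k. a i = (\<Sum>j<l. b j * r j i)))"
    unfolding fin_pres_def by blast
  from rel obtain l :: nat and r :: "nat \<Rightarrow> nat \<Rightarrow> 'a" and e :: "nat \<Rightarrow> int" where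
    r: "\<forall>j<l. (\<forall>i<k. r j i \<in> Agz Ag (e j - d i)) \<and> (\<Sum>i<k. r j i * g i) = 0" and
    rgen: "\<forall>a. (\<Sum>i<k. a i * g i) = 0 \<longrightarrow> (\<exists>b. \<forall>i<k. a i = (\<Sum>j<l. b j * r j i))"
    by blast
  have gJ: "\<exists>c. g i = (\<Sum>p<q. c p * v p)" if "i < k" for i
    using g that unfolding J_def by blast
  define \<beta>0 where "\<beta>0 i = (SOME c. g i = (\<Sum>p<q. c p * v p))" for i
  have \<beta>0: "g i = (\<Sum>p<q. \<beta>0 i p * v p)" if "i < k" for i
    unfolding \<beta>0_def using someI_ex[OF gJ[OF that]] .
  define \<beta> where "\<beta> i p = comp (Agz Ag) (\<beta>0 i p) (d i - \<epsilon> p)" for i p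
  have \<beta>: "g i = (\<Sum>p<q. \<beta> i p * v p)" if "i < k" for i
    unfolding \<beta>_def by (rule homogenize[OF ring _ \<beta>0[OF that] v]) (use g that in blast)
  have \<beta>deg: "\<beta> i p \<in> Agz Ag (d i - \<epsilon> p)" for i p unfolding \<beta>_def by (rule Agz_comp[OF ring])
  have vJ: "\<exists>c. v p = (\<Sum>i<k. c i * g i)" if "p < q" for p
  proof -
    have "v p = (\<Sum>p'<q. (if p' = p then 1 else 0) * v p')" using that by (simp add: delta_sum1)
    then have "v p \<in> J" unfolding J_def by (intro CollectI exI[of _ "\<lambda>p'. if p' = p then 1 else 0"]) simp
    then show ?thesis unfolding J by blast
  qed
  define \<alpha>0 where "\<alpha>0 p = (SOME c. v p = (\<Sum>i<k. c i * g i))" for p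
  have \<alpha>0: "v p = (\<Sum>i<k. \<alpha>0 p i * g i)" if "p < q" for p
    unfolding \<alpha>0_def using someI_ex[OF vJ[OF that]] .
  define \<alpha> where "\<alpha> p i = comp (Agz Ag) (\<alpha>0 p i) (\<epsilon> p - d i)" for p i
  have \<alpha>: "v p = (\<Sum>i<k. \<alpha> p i * g i)" if "p < q" for p
    unfolding \<alpha>_def by (rule homogenize[OF ring v[OF that] \<alpha>0[OF that]]) (use g in blast)
  have \<alpha>deg: "\<alpha> p i \<in> Agz Ag (\<epsilon> p - d i)" for p i unfolding \<alpha>_def by (rule Agz_comp[OF ring])
  define \<kappa> where "\<kappa> p p' = (if p = p' then 1 else 0) - (\<Sum>i<k. \<alpha> p i * \<beta> i p')" for p p'
  define \<rho> where "\<rho> j p' = (\<Sum>i<k. r j i * \<beta> i p')" for j p'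
  define \<sigma> where "\<sigma> s = (if s < q then \<kappa> s else \<rho> (s - q))" for s
  define \<eta> where "\<eta> s = (if s < q then \<epsilon> s else e (s - q))" for s
  have \<kappa>deg: "\<kappa> p p' \<in> Agz Ag (\<epsilon> p - \<epsilon> p')" for p p'
    unfolding \<kappa>_def
  proof (rule Agz_diff[OF ring])
    show "(if p = p' then 1 else 0) \<in> Agz Ag (\<epsilon> p - \<epsilon> p')" using one_Agz[OF ring] Agz_0[OF ring] by simp
    show "(\<Sum>i<k. \<alpha> p i * \<beta> i p') \<in> Agz Ag (\<epsilon> p - \<epsilon> p')"
      by (rule Agz_sum[OF ring], rule Agz_mult'[OF ring \<alpha>deg \<beta>deg]) simp
  qed
  have \<rho>deg: "\<rho> j p' \<in> Agz Ag (e j - \<epsilon> p')" if "j < l" for j p'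
    unfolding \<rho>_def
    by (rule Agz_sum[OF ring], rule Agz_mult'[OF ring _ \<beta>deg]) (use r that in auto)
  have \<kappa>syz: "(\<Sum>p'<q. \<kappa> p p' * v p') = 0" if "p < q" for p
  proof -
    have "(\<Sum>p'<q. \<kappa> p p' * v p') = (\<Sum>p'<q. (if p = p' then 1 else 0) * v p') - (\<Sum>p'<q. (\<Sum>i<k. \<alpha> p i * \<beta> i p') * v p')"
      unfolding \<kappa>_def by (simp add: left_diff_distrib sum_subtractf)
    also have "(\<Sum>p'<q. (if p = p' then 1 else 0) * v p') = v p" using that by (simp add: delta_sum2)
    also have "(\<Sum>p'<q. (\<Sum>i<k. \<alpha> p i * \<beta> i p') * v p') = (\<Sum>i<k. \<alpha> p i * (\<Sum>p'<q. \<beta> i p' * v p'))"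
      unfolding sum_distrib_left sum_distrib_right by (subst sum.swap) (simp add: mult.assoc)
    also have "\<dots> = (\<Sum>i<k. \<alpha> p i * g i)" using \<beta> by simp
    also have "\<dots> = v p" using \<alpha>[OF that] by simp
    finally show ?thesis by simp
  qed
  have \<rho>syz: "(\<Sum>p'<q. \<rho> j p' * v p') = 0" if "j < l" for j
  proof -
    have "(\<Sum>p'<q. \<rho> j p' * v p') = (\<Sum>i<k. r j i * (\<Sum>p'<q. \<beta> i p' * v p'))"
      unfolding \<rho>_def unfolding sum_distrib_left sum_distrib_right by (subst sum.swap) (simp add: mult.assoc)
    also have "\<dots> = (\<Sum>i<k. r j i * g i)" using \<beta> by simp
    also have "\<dots> = 0" using r that by blast
    finally show ?thesis .
  qed
  have P1: "\<forall>s<q + l. \<forall>p<q. \<sigma> s p \<in> Agz Ag (\<eta> s - \<epsilon> p)"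
    using \<kappa>deg \<rho>deg by (auto simp: \<sigma>_def \<eta>_def)
  have P2: "\<forall>s<q + l. (\<Sum>p<q. \<sigma> s p * v p) = 0"
    using \<kappa>syz \<rho>syz by (auto simp: \<sigma>_def)
  have P3: "\<forall>t. (\<Sum>p<q. t p * v p) = 0 \<longrightarrow> (\<exists>\<mu>. \<forall>p<q. t p = (\<Sum>s<q + l. \<mu> s * \<sigma> s p))"
  proof (intro allI impI)
    fix t assume t: "(\<Sum>p<q. t p * v p) = 0"
    define a where "a i = (\<Sum>p<q. t p * \<alpha> p i)" for i
    have "(\<Sum>i<k. a i * g i) = (\<Sum>p<q. t p * (\<Sum>i<k. \<alpha> p i * g i))"
      unfolding a_def unfolding sum_distrib_left sum_distrib_right by (subst sum.swap) (simp add: mult.assoc)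
    also have "\<dots> = 0" using \<alpha> t by simp
    finally obtain b where b: "\<forall>i<k. a i = (\<Sum>j<l. b j * r j i)" using rgen by blast
    define \<mu> where "\<mu> s = (if s < q then t s else b (s - q))" for s
    show "\<exists>\<mu>. \<forall>p<q. t p = (\<Sum>s<q + l. \<mu> s * \<sigma> s p)"
    proof (intro exI allI impI)
      fix p' assume p': "p' < q"
      have "(\<Sum>s<q + l. \<mu> s * \<sigma> s p') = (\<Sum>s<q. t s * \<kappa> s p') + (\<Sum>j<l. b j * \<rho> j p')"
        unfolding sum_lessThan_add_nat by (simp add: \<mu>_def \<sigma>_def)
      also have "(\<Sum>s<q. t s * \<kappa> s p') = t p' - (\<Sum>i<k. a i * \<beta> i p')"
      proof -
        have "(\<Sum>s<q. t s * \<kappa> s p') = (\<Sum>s<q. t s * (if s = p' then 1 else 0)) - (\<Sum>s<q. t s * (\<Sum>i<k. \<alpha> s i * \<beta> i p'))"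
          unfolding \<kappa>_def by (simp add: right_diff_distrib sum_subtractf)
        also have "(\<Sum>s<q. t s * (if s = p' then 1 else 0)) = t p'" using p' by (simp add: delta_sum3)
        also have "(\<Sum>s<q. t s * (\<Sum>i<k. \<alpha> s i * \<beta> i p')) = (\<Sum>i<k. a i * \<beta> i p')"
          unfolding a_def unfolding sum_distrib_left sum_distrib_right by (subst sum.swap) (simp add: mult.assoc)
        finally show ?thesis .
      qed
      also have "(\<Sum>j<l. b j * \<rho> j p') = (\<Sum>i<k. a i * \<beta> i p')"
      proof -
        have "(\<Sum>j<l. b j * \<rho> j p') = (\<Sum>i<k. (\<Sum>j<l. b j * r j i) * \<beta> i p')"
          unfolding \<rho>_def unfolding sum_distrib_left sum_distrib_right by (subst sum.swap) (simp add: mult.assoc)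
        also have "\<dots> = (\<Sum>i<k. a i * \<beta> i p')" using b by simp
        finally show ?thesis .
      qed
      finally show "t p' = (\<Sum>s<q + l. \<mu> s * \<sigma> s p')" by simp
    qed
  qed
  show ?thesis by (rule exI, rule exI, rule exI, rule conjI[OF P1 conjI[OF P2 P3]])
qed

lemma sum_swap_assoc: fixes c :: "'s \<Rightarrow> 'a::comm_ring_1"
  shows "(\<Sum>p\<in>P. (\<Sum>s\<in>S. c s * \<sigma> s p) * x p) = (\<Sum>s\<in>S. c s * (\<Sum>p\<in>P. \<sigma> s p * x p))"
  unfolding sum_distrib_left sum_distrib_right by (subst sum.swap) (simp add: mult.assoc)

lemma syzk:
  assumes ring: "graded_ring Ag" and coh: "coherent Ag"
  shows "\<forall>q w \<epsilon> \<delta>. (\<forall>p<q. \<forall>i<k. w p i \<in> Agz Ag (\<epsilon> p - \<delta> i)) \<longrightarrow> syz_gen Ag k q w \<epsilon>"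
proof (induction k)
  case 0
  show ?case
  proof (intro allI impI)
    fix q w \<epsilon> and \<delta> :: "nat \<Rightarrow> int"
    define \<sigma> where "\<sigma> s p = (if s = p then 1 else (0::'a))" for s p :: nat
    have P1: "\<forall>s<q. \<forall>p<q. \<sigma> s p \<in> Agz Ag (\<epsilon> s - \<epsilon> p)"
      using one_Agz[OF ring] Agz_0[OF ring] by (auto simp: \<sigma>_def)
    have P2: "\<forall>s<q. \<forall>i<0::nat. (\<Sum>p<q. \<sigma> s p * w p i) = 0" by simp
    have P3: "\<forall>t. (\<forall>i<0::nat. (\<Sum>p<q. t p * w p i) = 0) \<longrightarrow> (\<exists>\<mu>. \<forall>p<q. t p = (\<Sum>s<q. \<mu> s * \<sigma> s p))"
    proof (intro allI impI exI[where x="\<lambda>s. t s" for t])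
      fix t :: "nat \<Rightarrow> 'a" and p :: nat assume "p < q"
      then show "t p = (\<Sum>s<q. t s * \<sigma> s p)" unfolding \<sigma>_def by (simp add: delta_sum3)
    qed
    show "syz_gen Ag 0 q w \<epsilon>" unfolding syz_gen_def
      by (rule exI, rule exI, rule exI, rule conjI[OF P1 conjI[OF P2 P3]])
  qed
next
  case (Suc k)
  show ?case
  proof (intro allI impI)
    fix q and w :: "nat \<Rightarrow> nat \<Rightarrow> 'a" and \<epsilon> \<delta> :: "nat \<Rightarrow> int"
    assume w: "\<forall>p<q. \<forall>i<Suc k. w p i \<in> Agz Ag (\<epsilon> p - \<delta> i)"
    have vk: "w p k \<in> Agz Ag (\<epsilon> p - \<delta> k)" if "p < q" for p using w that by blast
    obtain l1 :: nat and \<sigma>1 :: "nat \<Rightarrow> nat \<Rightarrow> 'a" and \<eta>1 :: "nat \<Rightarrow> int" where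
      s1: "\<forall>s<l1. \<forall>p<q. \<sigma>1 s p \<in> Agz Ag (\<eta>1 s - (\<epsilon> p - \<delta> k))"
      and s2: "\<forall>s<l1. (\<Sum>p<q. \<sigma>1 s p * w p k) = 0"
      and s3: "\<forall>t. (\<Sum>p<q. t p * w p k) = 0 \<longrightarrow> (\<exists>\<mu>. \<forall>p<q. t p = (\<Sum>s<l1. \<mu> s * \<sigma>1 s p))"
      using syz1[OF ring coh, where v="\<lambda>p. w p k" and q=q and \<epsilon>="\<lambda>p. \<epsilon> p - \<delta> k", OF vk] by blast
    define W where "W s i = (\<Sum>p<q. \<sigma>1 s p * w p i)" for s i
    define \<eta>' where "\<eta>' s = \<eta>1 s + \<delta> k" for s
    have Wdeg: "\<forall>s<l1. \<forall>i<k. W s i \<in> Agz Ag (\<eta>' s - \<delta> i)"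
    proof (intro allI impI)
      fix s i assume si: "s < l1" "i < k"
      show "W s i \<in> Agz Ag (\<eta>' s - \<delta> i)" unfolding W_def
      proof (rule Agz_sum[OF ring])
        fix p assume "p \<in> {..<q}"
        then have p: "p < q" by simp
        show "\<sigma>1 s p * w p i \<in> Agz Ag (\<eta>' s - \<delta> i)"
          by (rule Agz_mult'[OF ring, where i="\<eta>1 s - (\<epsilon> p - \<delta> k)" and j="\<epsilon> p - \<delta> i"]) (use s1 si p w in \<open>auto simp: \<eta>'_def\<close>)
      qed
    qed
    have "syz_gen Ag k l1 W \<eta>'" using Suc.IH Wdeg by blast
    then obtain l2 :: nat and \<tau> :: "nat \<Rightarrow> nat \<Rightarrow> 'a" and \<theta> :: "nat \<Rightarrow> int" where
      t1: "\<forall>u<l2. \<forall>s<l1. \<tau> u s \<in> Agz Ag (\<theta> u - \<eta>' s)"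
      and t2: "\<forall>u<l2. \<forall>i<k. (\<Sum>s<l1. \<tau> u s * W s i) = 0"
      and t3: "\<forall>t. (\<forall>i<k. (\<Sum>s<l1. t s * W s i) = 0) \<longrightarrow> (\<exists>\<mu>. \<forall>s<l1. t s = (\<Sum>u<l2. \<mu> u * \<tau> u s))"
      unfolding syz_gen_def by blast
    define \<rho> where "\<rho> u p = (\<Sum>s<l1. \<tau> u s * \<sigma>1 s p)" for u p
    have P1: "\<forall>u<l2. \<forall>p<q. \<rho> u p \<in> Agz Ag (\<theta> u - \<epsilon> p)"
    proof (intro allI impI)
      fix u p assume up: "u < l2" "p < q"
      show "\<rho> u p \<in> Agz Ag (\<theta> u - \<epsilon> p)" unfolding \<rho>_def
      proof (rule Agz_sum[OF ring])
        fix s assume "s \<in> {..<l1}"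
        then have s: "s < l1" by simp
        show "\<tau> u s * \<sigma>1 s p \<in> Agz Ag (\<theta> u - \<epsilon> p)"
          by (rule Agz_mult'[OF ring, where i="\<theta> u - \<eta>' s" and j="\<eta>1 s - (\<epsilon> p - \<delta> k)"]) (use t1 s1 s up in \<open>auto simp: \<eta>'_def\<close>)
      qed
    qed
    have key: "(\<Sum>p<q. (\<Sum>s<l1. c s * \<sigma>1 s p) * w p i) = (\<Sum>s<l1. c s * W s i)" for c i
      unfolding W_def by (rule sum_swap_assoc)
    have P2: "\<forall>u<l2. \<forall>i<Suc k. (\<Sum>p<q. \<rho> u p * w p i) = 0"
    proof (intro allI impI)
      fix u i assume ui: "u < l2" "i < Suc k"
      have "(\<Sum>p<q. \<rho> u p * w p i) = (\<Sum>s<l1. \<tau> u s * W s i)" unfolding \<rho>_def by (rule key)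
      also have "\<dots> = 0"
      proof (cases "i < k")
        case True then show ?thesis using t2 ui by blast
      next
        case False
        then have "i = k" using ui by simp
        then show ?thesis using s2 by (simp add: W_def)
      qed
      finally show "(\<Sum>p<q. \<rho> u p * w p i) = 0" .
    qed
    have P3: "\<forall>t. (\<forall>i<Suc k. (\<Sum>p<q. t p * w p i) = 0) \<longrightarrow> (\<exists>\<mu>. \<forall>p<q. t p = (\<Sum>u<l2. \<mu> u * \<rho> u p))"
    proof (intro allI impI)
      fix t assume t: "\<forall>i<Suc k. (\<Sum>p<q. t p * w p i) = 0"
      then have "(\<Sum>p<q. t p * w p k) = 0" by blast
      then obtain \<mu>1 where \<mu>1: "\<forall>p<q. t p = (\<Sum>s<l1. \<mu>1 s * \<sigma>1 s p)" using s3 by blast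
      have "(\<Sum>s<l1. \<mu>1 s * W s i) = 0" if "i < k" for i
      proof -
        have "(\<Sum>s<l1. \<mu>1 s * W s i) = (\<Sum>p<q. (\<Sum>s<l1. \<mu>1 s * \<sigma>1 s p) * w p i)" by (rule key[symmetric])
        also have "\<dots> = (\<Sum>p<q. t p * w p i)" using \<mu>1 by simp
        also have "\<dots> = 0" using t that by simp
        finally show ?thesis .
      qed
      then obtain \<mu>2 where \<mu>2: "\<forall>s<l1. \<mu>1 s = (\<Sum>u<l2. \<mu>2 u * \<tau> u s)" using t3 by blast
      show "\<exists>\<mu>. \<forall>p<q. t p = (\<Sum>u<l2. \<mu> u * \<rho> u p)"
      proof (intro exI allI impI)
        fix p assume p: "p < q"
        have "t p = (\<Sum>s<l1. (\<Sum>u<l2. \<mu>2 u * \<tau> u s) * \<sigma>1 s p)" using \<mu>1 \<mu>2 p by simp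
        also have "\<dots> = (\<Sum>u<l2. \<mu>2 u * \<rho> u p)" unfolding \<rho>_def by (rule sum_swap_assoc)
        finally show "t p = (\<Sum>u<l2. \<mu>2 u * \<rho> u p)" .
      qed
    qed
    show "syz_gen Ag (Suc k) q w \<epsilon>" unfolding syz_gen_def
      by (rule exI, rule exI, rule exI, rule conjI[OF P1 conjI[OF P2 P3]])
  qed
qed

lemma ann_fg:
  fixes sm :: "'a::comm_ring_1 \<Rightarrow> 'm::ab_group_add \<Rightarrow> 'm"
  assumes ring: "graded_ring Ag" and coh: "coherent Ag" and M: "gmod Ag sm Mg"
    and fp: "fin_pres Ag sm Mg UNIV" and m: "m \<in> Mg n"
  shows "\<exists>(L::nat) (b::nat \<Rightarrow> 'a). (\<forall>j<L. sm (b j) m = 0) \<and> (\<forall>c. sm c m = 0 \<longrightarrow> (\<exists>\<mu>. c = (\<Sum>j<L. \<mu> j * b j)))"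
proof -
  interpret M: gmod Ag sm Mg by fact
  obtain k :: nat and g :: "nat \<Rightarrow> 'm" and d :: "nat \<Rightarrow> int" where
    g: "\<forall>i<k. g i \<in> UNIV \<inter> Mg (d i)" and gen: "UNIV = {\<Sum>i<k. sm (a i) (g i) | a. True}" and
    rel: "\<exists>(l::nat) (r::nat \<Rightarrow> nat \<Rightarrow> 'a) (e::nat \<Rightarrow> int).
           (\<forall>j<l. (\<forall>i<k. r j i \<in> Agz Ag (e j - d i)) \<and> (\<Sum>i<k. sm (r j i) (g i)) = 0) \<and>
           (\<forall>a. (\<Sum>i<k. sm (a i) (g i)) = 0 \<longrightarrow> (\<exists>b. \<forall>i<k. a i = (\<Sum>j<l. b j * r j i)))"
    using fp unfolding fin_pres_def by blast
  from rel obtain l :: nat and r :: "nat \<Rightarrow> nat \<Rightarrow> 'a" and e :: "nat \<Rightarrow> int" where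
    r: "\<forall>j<l. (\<forall>i<k. r j i \<in> Agz Ag (e j - d i)) \<and> (\<Sum>i<k. sm (r j i) (g i)) = 0" and
    rgen: "\<forall>a. (\<Sum>i<k. sm (a i) (g i)) = 0 \<longrightarrow> (\<exists>b. \<forall>i<k. a i = (\<Sum>j<l. b j * r j i))"
    by blast
  have "m \<in> {\<Sum>i<k. sm (a i) (g i) | a. True}" using gen by blast
  then obtain a0 where a0: "m = (\<Sum>i<k. sm (a0 i) (g i))" by blast
  define c where "c i = comp (Agz Ag) (a0 i) (n - d i)" for i
  have cdeg: "c i \<in> Agz Ag (n - d i)" for i unfolding c_def by simp
  have mc: "m = (\<Sum>i<k. sm (c i) (g i))"
  proof -
    have "m = comp Mg m n" using m by (simp add: M.comp_hom)
    also have "\<dots> = (\<Sum>i<k. comp Mg (sm (a0 i) (g i)) n)" using a0 by (simp add: M.comp_sum)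
    also have "\<dots> = (\<Sum>i<k. sm (c i) (g i))"
      by (rule sum.cong) (use g in \<open>simp_all add: c_def M.sm_comp\<close>)
    finally show ?thesis .
  qed
  have smm: "sm x m = (\<Sum>i<k. sm (x * c i) (g i))" for x
    using mc by (simp add: M.sm_sum_right M.sm_mult)
  define w where "w p i = (if p < l then r p i else c i)" for p i
  define \<epsilon> where "\<epsilon> p = (if p < l then e p else n)" for p
  have wdeg: "\<forall>p<Suc l. \<forall>i<k. w p i \<in> Agz Ag (\<epsilon> p - d i)"
    using r cdeg by (auto simp: w_def \<epsilon>_def)
  have "syz_gen Ag k (Suc l) w \<epsilon>" using syzk[OF ring coh] wdeg by blast
  then obtain L :: nat and \<sigma> :: "nat \<Rightarrow> nat \<Rightarrow> 'a" and \<eta> :: "nat \<Rightarrow> int" where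
    s2: "\<forall>s<L. \<forall>i<k. (\<Sum>p<Suc l. \<sigma> s p * w p i) = 0"
    and s3: "\<forall>t. (\<forall>i<k. (\<Sum>p<Suc l. t p * w p i) = 0) \<longrightarrow> (\<exists>\<mu>. \<forall>p<Suc l. t p = (\<Sum>s<L. \<mu> s * \<sigma> s p))"
    unfolding syz_gen_def by blast
  have splitw: "(\<Sum>p<Suc l. t p * w p i) = (\<Sum>p<l. t p * r p i) + t l * c i" for t i
    by (simp add: w_def)
  define b where "b s = \<sigma> s l" for s
  have P1: "\<forall>j<L. sm (b j) m = 0"
  proof (intro allI impI)
    fix s assume s: "s < L"
    have eq: "\<sigma> s l * c i = - (\<Sum>p<l. \<sigma> s p * r p i)" if "i < k" for i
      using s2 s that splitw[of "\<sigma> s" i] by (simp add: eq_neg_iff_add_eq_0 add.commute)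
    have "sm (b s) m = (\<Sum>i<k. sm (- (\<Sum>p<l. \<sigma> s p * r p i)) (g i))"
      unfolding smm b_def by (rule sum.cong) (simp_all add: eq)
    also have "\<dots> = - (\<Sum>p<l. sm (\<sigma> s p) (\<Sum>i<k. sm (r p i) (g i)))"
      by (simp add: M.sm_minus_left M.sm_sum_left M.sm_sum_right M.sm_mult sum_negf) (rule sum.swap)
    also have "\<dots> = 0" using r by simp
    finally show "sm (b s) m = 0" .
  qed
  have P2: "\<forall>c'. sm c' m = 0 \<longrightarrow> (\<exists>\<mu>. c' = (\<Sum>j<L. \<mu> j * b j))"
  proof (intro allI impI)
    fix c' assume c': "sm c' m = 0"
    then have "(\<Sum>i<k. sm (c' * c i) (g i)) = 0" using smm by simp
    then obtain \<beta> where \<beta>: "\<forall>i<k. c' * c i = (\<Sum>j<l. \<beta> j * r j i)" using rgen[rule_format, of "\<lambda>i. c' * c i"] by blast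
    define t where "t p = (if p < l then - \<beta> p else c')" for p
    have "\<forall>i<k. (\<Sum>p<Suc l. t p * w p i) = 0"
    proof (intro allI impI)
      fix i assume i: "i < k"
      have "(\<Sum>p<Suc l. t p * w p i) = (\<Sum>p<l. - \<beta> p * r p i) + c' * c i"
        unfolding splitw by (simp add: t_def)
      also have "\<dots> = 0" using \<beta> i by (simp add: sum_negf)
      finally show "(\<Sum>p<Suc l. t p * w p i) = 0" .
    qed
    then obtain \<mu> where "\<forall>p<Suc l. t p = (\<Sum>s<L. \<mu> s * \<sigma> s p)" using s3 by blast
    then have "t l = (\<Sum>s<L. \<mu> s * \<sigma> s l)" by blast
    then show "\<exists>\<mu>. c' = (\<Sum>j<L. \<mu> j * b j)" by (auto simp: t_def b_def)
  qed
  show ?thesis by (rule exI, rule exI, rule conjI[OF P1 P2])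
qed

theorem theorem3p9:
  fixes Ag :: "nat \<Rightarrow> 'a::comm_ring_1 set"
    and se :: "'a \<Rightarrow> 'e::ab_group_add \<Rightarrow> 'e" and Eg :: "int \<Rightarrow> 'e set"
    and sf :: "'a \<Rightarrow> 'f::ab_group_add \<Rightarrow> 'f" and Fg :: "int \<Rightarrow> 'f set"
    and sm :: "'a \<Rightarrow> 'm::ab_group_add \<Rightarrow> 'm" and Mg :: "int \<Rightarrow> 'm set"
  assumes "graded_ring Ag" and "coherent Ag"
    and "graded_module Ag se Eg" and "gr_injective TYPE('a) Ag se Eg" and "indecomposable se Eg"
    and "inj_hull_quot TYPE('a) Ag (PE se Eg) sf Fg"
    and "in_grA Ag sm Mg"
  shows "Hom_nonzero sm Mg se Eg \<longleftrightarrow> Hom_nonzero sm Mg sf Fg"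
proof -
  note ring = assms(1) and coh = assms(2)
  interpret E: Einj Ag se Eg using assms(1,3,4,5) by unfold_locales
  have gmF: "graded_module Ag sf Fg" and injF: "gr_injective TYPE('a) Ag sf Fg"
    and "\<exists>\<phi>. gr_hom (*) (Agz Ag) sf Fg 0 \<phi> \<and> {a. \<phi> a = 0} = PE se Eg \<and>
        (\<forall>S. graded_submodule sf Fg S \<and> S \<noteq> {0} \<longrightarrow> (\<exists>y\<in>S. y \<noteq> 0 \<and> y \<in> range \<phi>))"
    using assms(6) unfolding inj_hull_quot_def by blast+
  then obtain \<phi> where \<phi>: "gr_hom (*) (Agz Ag) sf Fg 0 \<phi>" and ker: "{a. \<phi> a = 0} = PE se Eg"
    and ess: "\<And>S. graded_submodule sf Fg S \<Longrightarrow> S \<noteq> {0} \<Longrightarrow> \<exists>y\<in>S. y \<noteq> 0 \<and> y \<in> range \<phi>" by blast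
  interpret F: gmod Ag sf Fg using ring gmF by unfold_locales
  have gmM: "graded_module Ag sm Mg" and fp: "fin_pres Ag sm Mg UNIV" using assms(7) unfolding in_grA_def by blast+
  interpret M: gmod Ag sm Mg using ring gmM by unfold_locales
  interpret R: gmod Ag "(*)" "Agz Ag" using gmod_ring_shift[OF ring, of 0] by simp
  interpret RF: gmod2 Ag "(*)" "Agz Ag" sf Fg by unfold_locales
  interpret MF: gmod2 Ag sm Mg sf Fg by unfold_locales
  interpret ME: gmod2 Ag sm Mg se Eg by unfold_locales
  have kerP: "\<phi> a = 0 \<longleftrightarrow> a \<in> PE se Eg" for a using ker by blast
  have \<phi>1: "\<phi> a = sf a (\<phi> 1)" for a using gr_hom_sm[OF \<phi>, of a 1] by simp
  have \<phi>1deg: "\<phi> 1 \<in> Fg 0" using gr_hom_deg[OF \<phi> one_Agz[OF ring]] by simp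
  have \<phi>1nz: "\<phi> 1 \<noteq> 0" using kerP E.one_notin_PE by blast
  show ?thesis
  proof
    assume "Hom_nonzero sm Mg se Eg"
    then obtain d f x where f: "gr_hom sm Mg se Eg d f" and fx: "f x \<noteq> 0" unfolding Hom_nonzero_def by blast
    obtain t where t: "comp Eg (f x) t \<noteq> 0" using E.E.ex_comp_nonzero[OF fx] by blast
    define m where "m = comp Mg x (t - d)"
    have fm: "f m = comp Eg (f x) t" unfolding m_def by (rule ME.gr_hom_comp'[OF f, symmetric])
    have mdeg: "m \<in> Mg (t - d)" unfolding m_def by simp
    have ann: "sf c (\<phi> 1) = 0" if "sm c m = 0" for c
    proof -
      have "se c (f m) = 0" using that gr_hom_sm[OF f, of c m] gr_hom_0[OF f] by simp
      moreover have "f m \<in> Eg t" using fm by simp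
      moreover have "f m \<noteq> 0" using fm t by simp
      ultimately have "c \<in> PE se Eg" unfolding E.PE_char by blast
      then have "\<phi> c = 0" using kerP by simp
      then show ?thesis using \<phi>1[of c] by simp
    qed
    obtain g where g: "gr_hom sm Mg sf Fg (0 - (t - d)) g" "g m = \<phi> 1"
      using cyc_ext[OF F.gmod_axioms injF M.gmod_axioms mdeg \<phi>1deg ann] by blast
    have "g m \<noteq> 0" using g(2) \<phi>1nz by simp
    then show "Hom_nonzero sm Mg sf Fg" unfolding Hom_nonzero_def using g(1) by blast
  next
    assume "Hom_nonzero sm Mg sf Fg"
    then obtain d f x where f: "gr_hom sm Mg sf Fg d f" and fx: "f x \<noteq> 0" unfolding Hom_nonzero_def by blast
    have rg: "graded_submodule sf Fg (range f)" by (rule MF.gsub_range[OF f])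
    have "range f \<noteq> {0}" using fx by blast
    then obtain y where y: "y \<in> range f" "y \<noteq> 0" "y \<in> range \<phi>" using ess[OF rg] by blast
    obtain x' where x': "y = f x'" using y(1) by blast
    obtain a where a: "y = \<phi> a" using y(3) by blast
    obtain t where t: "comp Fg y t \<noteq> 0" using F.ex_comp_nonzero[OF y(2)] by blast
    define m where "m = comp Mg x' (t - d)"
    define a' where "a' = comp (Agz Ag) a t"
    have fm: "f m = comp Fg y t" unfolding m_def x' by (rule MF.gr_hom_comp'[OF f, symmetric])
    have \<phi>a': "\<phi> a' = comp Fg y t" unfolding a'_def a using RF.gr_hom_comp'[OF \<phi>, of a t] by simp
    have mdeg: "m \<in> Mg (t - d)" unfolding m_def by simp
    have a'deg: "a' \<in> Agz Ag t" unfolding a'_def by simp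
    have a'P: "a' \<notin> PE se Eg" using kerP[of a'] \<phi>a' t by simp
    obtain L :: nat and b :: "nat \<Rightarrow> 'a" where b1: "\<forall>j<L. sm (b j) m = 0"
      and b2: "\<forall>c. sm c m = 0 \<longrightarrow> (\<exists>\<mu>. c = (\<Sum>j<L. \<mu> j * b j))"
      using ann_fg[OF ring coh M.gmod_axioms fp mdeg] by blast
    have bP: "\<forall>j<L. b j * a' \<in> PE se Eg"
    proof (intro allI impI)
      fix j assume j: "j < L"
      have "\<phi> (b j * a') = sf (b j) (\<phi> a')" by (rule gr_hom_sm[OF \<phi>])
      also have "\<dots> = f (sm (b j) m)" using fm \<phi>a' gr_hom_sm[OF f] by simp
      also have "\<dots> = 0" using b1 j gr_hom_0[OF f] by simp
      finally show "b j * a' \<in> PE se Eg" using kerP by simp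
    qed
    obtain x0 u where x0: "x0 \<in> Eg u" "x0 \<noteq> 0" "\<forall>j<L. se (b j * a') x0 = 0"
      using E.PE_list[OF bP] by blast
    define z where "z = se a' x0"
    have znz: "z \<noteq> 0"
    proof
      assume "z = 0"
      then have "a' \<in> PE se Eg" unfolding E.PE_char z_def using x0(1,2) by blast
      then show False using a'P by simp
    qed
    have zdeg: "z \<in> Eg (t + u)" unfolding z_def by (rule E.E.sm_deg[OF a'deg x0(1)])
    have ann: "se c z = 0" if "sm c m = 0" for c
    proof -
      from b2[rule_format, OF that] obtain \<mu> where \<mu>: "c = (\<Sum>j<L. \<mu> j * b j)" ..
      have "se c z = (\<Sum>j<L. se (\<mu> j) (se (b j * a') x0))"
        unfolding \<mu> z_def by (simp add: E.E.sm_sum_left E.E.sm_mult[symmetric] mult.assoc sum_distrib_right)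
      also have "\<dots> = 0" using x0(3) by simp
      finally show ?thesis .
    qed
    obtain g where g: "gr_hom sm Mg se Eg (t + u - (t - d)) g" "g m = z"
      using cyc_ext[OF E.E.gmod_axioms E.inj M.gmod_axioms mdeg zdeg ann] by blast
    have "g m \<noteq> 0" using g(2) znz by simp
    then show "Hom_nonzero sm Mg se Eg" unfolding Hom_nonzero_def using g(1) by blast
  qed
qed

end
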